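(* Let $a\in\mathbb{R}$, $T>0$ and let $\mathcal{G}_{\mathrm{adv}}$ and $\mu$ be as in the context. There exists a constant $C>0$ such that for any $\epsilon\in(0,\tfrac12]$ there exists a shift-DeepONet $\mathcal{N}^{\mathrm{sDON}}_\epsilon$ (with ReLU networks as components) with $p\le C$ trunk/branch functions and $m\le C\epsilon^{-1}$ (equidistant) sensor points such that \[ \mathbb{E}_{\bar u\sim\mu}\big[\|\mathcal{G}_{\mathrm{adv}}(\bar u)-\mathcal{N}^{\mathrm{sDON}}_\epsilon(\bar u)\|_{L^1(\mathbb{T})}\big]\le\epsilon, \] and \[ \mathrm{width}(\mathcal{N}^{\mathrm{sDON}}_\epsilon)\le C,\quad \mathrm{depth}(\mathcal{N}^{\mathrm{sDON}}_\epsilon)\le C\log(\epsilon^{-1})^2,\quad \mathrm{size}(\mathcal{N}^{\mathrm{sDON}}_\epsilon)\le C\epsilon^{-1}. \]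
   Context: $\mathbb{T}=\mathbb{R}/2\pi\mathbb{Z}$. Fix $0<\underline h\le\overline h$ and $0<\underline w\le\overline w<2\pi$. The input measure $\mu$ is the law of $\bar u(x)=h\,1_{[-w/2,w/2]}(x-\xi)$ (periodized), with independent $h\sim\mathrm{Unif}[\underline h,\overline h]$, $w\sim\mathrm{Unif}[\underline w,\overline w]$, $\xi\sim\mathrm{Unif}[0,2\pi]$. $\mathcal{G}_{\mathrm{adv}}(\bar u)(x)=\bar u(x-aT)$ (solution at time $T$ of $\partial_tu+a\partial_xu=0$). A shift-DeepONet with sensor points $x_1,\dots,x_m$ and $p$ basis functions is an operator $\mathcal{N}^{\mathrm{sDON}}(\bar u)(y)=\sum_{k=1}^p\beta_k(\mathcal{E}(\bar u))\,\tau_k\big(\mathcal{A}_k(\mathcal{E}(\bar u))\,y+\gamma_k(\mathcal{E}(\bar u))\big)$, where $\mathcal{E}(\bar u)=(\bar u(x_1),\dots,\bar u(x_m))$, and the branch net $\boldsymbol\beta:\mathbb{R}^m\to\mathbb{R}^p$, trunk net $\boldsymbol\tau:\mathbb{R}\to\mathbb{R}^p$, scale net $\mathcal{A}=(\mathcal{A}_k):\mathbb{R}^m\to\mathbb{R}^p$ and shift net $\boldsymbol\gamma=(\gamma_k):\mathbb{R}^m\to\mathbb{R}^p$ are neural networks. For a neural network, depth is the number of hidden layers and width the maximal number of neurons in a hidden layer. For a shift-DeepONet, $\mathrm{width}=\mathrm{width}(\boldsymbol\beta)+\mathrm{width}(\boldsymbol\tau)+\mathrm{width}(\mathcal{A})+\mathrm{width}(\boldsymbol\gamma)$,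 $\mathrm{depth}=\max$ of the four depths, and $\mathrm{size}=(m+p)\,\mathrm{width}+\mathrm{width}^2\,\mathrm{depth}$. *)

theory Defs
  imports "HOL-Probability.Probability"
begin

text \<open>A layer is an affine map given by a weight matrix (list of rows) and a bias vector.
  A network is a nonempty list of layers; ReLU is applied after every layer except the last.\<close>

type_synonym layer = "real list list \<times> real list"

definition affine :: "layer \<Rightarrow> real list \<Rightarrow> real list" where
  "affine L x = map2 (\<lambda>row bi. sum_list (map2 (*) row x) + bi) (fst L) (snd L)"

definition relu_vec :: "real list \<Rightarrow> real list" where
  "relu_vec x = map (\<lambda>t. max 0 t) x"

fun nn_eval :: "layer list \<Rightarrow> real list \<Rightarrow> real list" where
  "nn_eval [] x = x"
| "nn_eval [L] x = affine L x"
| "nn_eval (L # L' # Ls) x = nn_eval (L' # Ls) (relu_vec (affine L x))"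

definition nn_wf :: "nat \<Rightarrow> nat \<Rightarrow> layer list \<Rightarrow> bool" where
  "nn_wf din dout Ls \<longleftrightarrow> Ls \<noteq> [] \<and>
     (\<exists>ds. length ds = Suc (length Ls) \<and> ds ! 0 = din \<and> ds ! length Ls = dout \<and>
        (\<forall>k<length Ls. length (fst (Ls ! k)) = ds ! Suc k \<and> length (snd (Ls ! k)) = ds ! Suc k \<and>
                        (\<forall>r\<in>set (fst (Ls ! k)). length r = ds ! k)))"

definition nn_depth :: "layer list \<Rightarrow> nat" where
  "nn_depth Ls = length Ls - 1"

definition nn_width :: "layer list \<Rightarrow> nat" where
  "nn_width Ls = foldr max (map (\<lambda>L. length (snd L)) (butlast Ls)) 0"

text \<open>Sensor points xs (m = length xs), branch net B, trunk net Tr, scale net A, shift net G.\<close>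
definition sdon_eval ::
  "real list \<Rightarrow> nat \<Rightarrow> layer list \<Rightarrow> layer list \<Rightarrow> layer list \<Rightarrow> layer list
     \<Rightarrow> (real \<Rightarrow> real) \<Rightarrow> real \<Rightarrow> real" where
  "sdon_eval xs p B Tr A G u y =
     (let e = map u xs in
      \<Sum>k<p. nn_eval B e ! k *
              nn_eval Tr [nn_eval A e ! k * y + nn_eval G e ! k] ! k)"

definition sdon_wf :: "nat \<Rightarrow> nat \<Rightarrow> layer list \<Rightarrow> layer list \<Rightarrow> layer list \<Rightarrow> layer list \<Rightarrow> bool" where
  "sdon_wf m p B Tr A G \<longleftrightarrow> nn_wf m p B \<and> nn_wf 1 p Tr \<and> nn_wf m p A \<and> nn_wf m p G"

definition sdon_width :: "layer list \<Rightarrow> layer list \<Rightarrow> layer list \<Rightarrow> layer list \<Rightarrow> nat" where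
  "sdon_width B Tr A G = nn_width B + nn_width Tr + nn_width A + nn_width G"

definition sdon_depth :: "layer list \<Rightarrow> layer list \<Rightarrow> layer list \<Rightarrow> layer list \<Rightarrow> nat" where
  "sdon_depth B Tr A G = max (max (nn_depth B) (nn_depth Tr)) (max (nn_depth A) (nn_depth G))"

definition sdon_size :: "nat \<Rightarrow> nat \<Rightarrow> layer list \<Rightarrow> layer list \<Rightarrow> layer list \<Rightarrow> layer list \<Rightarrow> nat" where
  "sdon_size m p B Tr A G =
     (m + p) * sdon_width B Tr A G + (sdon_width B Tr A G)^2 * sdon_depth B Tr A G"

text \<open>Periodized step: h * 1_{[-w/2,w/2]}(x - xi) on the torus R/2piZ.\<close>
definition bump :: "real \<Rightarrow> real \<Rightarrow> real \<Rightarrow> real \<Rightarrow> real" where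
  "bump h w xi x = (if \<exists>k::int. \<bar>x - xi - 2 * pi * of_int k\<bar> \<le> w / 2 then h else 0)"

definition G_adv :: "real \<Rightarrow> real \<Rightarrow> (real \<Rightarrow> real) \<Rightarrow> (real \<Rightarrow> real)" where
  "G_adv a T u = (\<lambda>x. u (x - a * T))"

text \<open>Uniform law on [lo,hi]; degenerate interval gives the point mass.\<close>
definition unif :: "real \<Rightarrow> real \<Rightarrow> real measure" where
  "unif lo hi = (if lo < hi then uniform_measure lborel {lo..hi} else return lborel lo)"

text \<open>L^1(T) distance (functions on T viewed as 2pi-periodic functions on R).\<close>
definition L1T_dist :: "(real \<Rightarrow> real) \<Rightarrow> (real \<Rightarrow> real) \<Rightarrow> ennreal" where
  "L1T_dist f g = (\<integral>\<^sup>+ y. ennreal \<bar>f y - g y\<bar> * indicator {0..2*pi} y \<partial>lborel)"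

text \<open>Expectation over ubar ~ mu, as an integral over the parameters (h,(w,xi)).\<close>
definition mu_expect :: "real \<Rightarrow> real \<Rightarrow> real \<Rightarrow> real \<Rightarrow> ((real \<Rightarrow> real) \<Rightarrow> ennreal) \<Rightarrow> ennreal" where
  "mu_expect hl hh wl wh F =
     (\<integral>\<^sup>+ q. F (bump (fst q) (fst (snd q)) (snd (snd q)))
        \<partial>(unif hl hh \<Otimes>\<^sub>M (unif wl wh \<Otimes>\<^sub>M unif 0 (2*pi))))"

end

theory Submission
  imports Defs
begin

definition mk_layer :: "nat \<Rightarrow> nat \<Rightarrow> (nat \<Rightarrow> nat \<Rightarrow> real) \<Rightarrow> (nat \<Rightarrow> real) \<Rightarrow> layer" where
  "mk_layer n k W b = (map (\<lambda>i. map (\<lambda>j. W i j) [0..<n]) [0..<k], map b [0..<k])"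

lemma sum_list_map2_upt:
  "sum_list (map2 (*) (map f [0..<n]) (map g [0..<n])) = (\<Sum>j<n. f j * (g j::real))"
proof (induction n)
  case 0 then show ?case by simp
next
  case (Suc n)
  have "zip (map f [0..<Suc n]) (map g [0..<Suc n]) = zip (map f [0..<n]) (map g [0..<n]) @ [(f n, g n)]"
    by simp
  then show ?case using Suc by (simp add: sum.lessThan_Suc)
qed

lemma affine_mk:
  "affine (mk_layer n k W b) (map x [0..<n]) = map (\<lambda>i. (\<Sum>j<n. W i j * x j) + b i) [0..<k]"
proof (rule nth_equalityI)
  show "length (affine (mk_layer n k W b) (map x [0..<n])) = length (map (\<lambda>i. (\<Sum>j<n. W i j * x j) + b i) [0..<k])"
    by (simp add: affine_def mk_layer_def)
  fix i assume "i < length (affine (mk_layer n k W b) (map x [0..<n]))"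
  then have i: "i < k" by (simp add: affine_def mk_layer_def)
  have "affine (mk_layer n k W b) (map x [0..<n]) ! i = sum_list (map2 (*) (map (W i) [0..<n]) (map x [0..<n])) + b i"
    using i by (simp add: affine_def mk_layer_def)
  also have "\<dots> = (\<Sum>j<n. W i j * x j) + b i" by (simp add: sum_list_map2_upt)
  finally show "affine (mk_layer n k W b) (map x [0..<n]) ! i = map (\<lambda>i. (\<Sum>j<n. W i j * x j) + b i) [0..<k] ! i"
    using i by simp
qed

lemma relu_map: "relu_vec (map f [0..<k]) = map (\<lambda>i. max 0 (f i)) [0..<k]"
  by (simp add: relu_vec_def)

lemma fst_mk: "fst (mk_layer n k W b) = map (\<lambda>i. map (\<lambda>j. W i j) [0..<n]) [0..<k]"
  and snd_mk: "snd (mk_layer n k W b) = map b [0..<k]"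
  by (simp_all add: mk_layer_def)


definition cat :: "nat \<Rightarrow> (nat \<Rightarrow> 'a) \<Rightarrow> (nat \<Rightarrow> 'a) \<Rightarrow> nat \<Rightarrow> 'a" where
  "cat K f g j = (if j < K then f j else g (j - K))"

lemma cat_lt[simp]: "j < K \<Longrightarrow> cat K f g j = f j" and cat_ge[simp]: "K \<le> j \<Longrightarrow> cat K f g j = g (j - K)"
  by (simp_all add: cat_def)

lemma sum_split_add: "(\<Sum>j<(K::nat)+K'. F j) = (\<Sum>j<K. F j) + (\<Sum>j<K'. F (K + j))"
proof (induction K')
  case 0 then show ?case by simp
next
  case (Suc K') then show ?case by (simp add: add.assoc)
qed

lemma sum_cat:
  "(\<Sum>j<(K::nat)+K'. cat K f g j * cat K u v j) = (\<Sum>j<K. f j * u j) + (\<Sum>j<K'. g j * (v j::real))"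
  by (simp add: sum_split_add)

lemma sum_delta_mult: "(\<Sum>j<(K::nat). (if j = a then c else 0) * f j) = (if a < K then c * (f a::real) else 0)"
  by (simp add: if_distrib[of "\<lambda>x. x * f _"] sum.delta cong: if_cong)

lemma sum_delta_mult': "a < (K::nat) \<Longrightarrow> (\<Sum>j<K. (if j = a then c else 0) * f j) = c * (f a::real)"
  by (simp add: sum_delta_mult)


definition blk :: "nat \<Rightarrow> nat \<Rightarrow> nat \<Rightarrow> real" where
  "blk d i j = (if i*d \<le> j \<and> j < i*d + d then 1 else 0)"
definition dl :: "nat \<Rightarrow> nat \<Rightarrow> real" where
  "dl a j = (if j = a then 1 else 0)"
definition pv :: "nat \<Rightarrow> nat \<Rightarrow> nat" where
  "pv K i = (if i = 0 then K - 1 else i - 1)"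

lemma sum_dl[simp]: "a < (K::nat) \<Longrightarrow> (\<Sum>j<K. dl a j * f j) = f a"
  unfolding dl_def by (simp add: sum_delta_mult)

lemma sum_dl_diff: "a < (K::nat) \<Longrightarrow> b < K \<Longrightarrow> (\<Sum>j<K. (dl a j - dl b j) * f j) = f a - f b"
  by (simp add: left_diff_distrib sum_subtractf)

lemma sum_dl_diff_div: "a < (K::nat) \<Longrightarrow> b < K \<Longrightarrow> (\<Sum>j<K. (dl a j - dl b j) * f j / c) = (f a - f b) / c"
proof -
  assume "a < K" "b < K"
  have "(\<Sum>j<K. (dl a j - dl b j) * f j / c) = (\<Sum>j<K. (dl a j - dl b j) * f j) / c"
    by (simp add: sum_divide_distrib)
  then show ?thesis using \<open>a<K\<close> \<open>b<K\<close> by (simp add: sum_dl_diff)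
qed

lemma pv_lt: "0 < K \<Longrightarrow> i < K \<Longrightarrow> pv K i < K"
  unfolding pv_def by auto

lemma blk_sum: "i < K \<Longrightarrow> (\<Sum>j<K*d. blk d i j * s j) = (\<Sum>j\<in>{i*d..<i*d+d}. s j)"
proof -
  assume i: "i < K"
  have "(\<Sum>j<K*d. blk d i j * s j) = (\<Sum>j<K*d. if j \<in> {i*d..<i*d+d} then s j else 0)"
    by (rule sum.cong) (auto simp: blk_def)
  also have "\<dots> = (\<Sum>j\<in>{..<K*d} \<inter> {i*d..<i*d+d}. s j)"
    by (simp add: sum.inter_restrict)
  also have "{..<K*d} \<inter> {i*d..<i*d+d} = {i*d..<i*d+d}"
  proof -
    have "i*d + d \<le> K*d" using i by (metis Suc_leI add.commute mult_Suc mult_le_mono1)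
    then show ?thesis by auto
  qed
  finally show ?thesis .
qed

lemma layer_step:
  assumes "\<And>i. i < k \<Longrightarrow> max 0 ((\<Sum>j<n. W i j * x j) + b i) = y i"
  shows "relu_vec (affine (mk_layer n k W b) (map x [0..<n])) = map y [0..<k]"
  unfolding affine_mk relu_map using assms by simp

definition W1 :: "nat \<Rightarrow> nat \<Rightarrow> real \<Rightarrow> nat \<Rightarrow> nat \<Rightarrow> real" where
  "W1 K d hl i j = (if i < K then blk d i j else blk d (i - K) j / hl)"
definition b1 :: "nat \<Rightarrow> nat \<Rightarrow> real" where
  "b1 K i = (if i < K then 0 else -1)"
definition W2 :: "nat \<Rightarrow> real \<Rightarrow> nat \<Rightarrow> nat \<Rightarrow> real" where
  "W2 K hl i j = (if i < K then cat K (\<lambda>j. dl i j) (\<lambda>j. 0) j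
     else cat K (\<lambda>j. (dl (i-K) j - dl (pv K (i-K)) j)/hl) (\<lambda>j. dl (pv K (i-K)) j - dl (i-K) j) j)"
definition W3 :: "nat \<Rightarrow> real \<Rightarrow> nat \<Rightarrow> nat \<Rightarrow> real" where
  "W3 K D i j = (if i < K then cat K (\<lambda>j. dl i j) (\<lambda>j. 0) j
     else if i < K+K then cat K (\<lambda>j. 0) (\<lambda>j. dl (i-K) j) j
     else cat K (\<lambda>j. dl (i-K-K) j) (\<lambda>j. - D * dl (pv K (i-K-K)) j) j)"
definition W4 :: "nat \<Rightarrow> real \<Rightarrow> nat \<Rightarrow> nat \<Rightarrow> real" where
  "W4 K M i j = (if i < K then cat K (\<lambda>j. real (i+1) - dl i j) (cat K (\<lambda>j. 0) (\<lambda>j. - real (i+1))) j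
     else if i < K+K then cat K (\<lambda>j. real (i-K+1) - dl (i-K) j) (cat K (\<lambda>j. - M * dl (i-K) j) (\<lambda>j. - real (i-K+1))) j
     else if i = K+K then cat K (\<lambda>j. 1) (cat K (\<lambda>j. 0) (\<lambda>j. -1)) j
     else cat K (\<lambda>j. 1) (cat K (\<lambda>j. 0) (\<lambda>j. 0)) j)"
definition WA :: "nat \<Rightarrow> nat \<Rightarrow> nat \<Rightarrow> nat \<Rightarrow> real" where
  "WA K d i j = cat K (\<lambda>j. 0) (cat K (\<lambda>j. 0) (\<lambda>t. if t = 0 then 1 / real d else 0)) j"
definition gH :: "nat \<Rightarrow> real \<Rightarrow> nat \<Rightarrow> real" where
  "gH d \<delta> i = (if odd i then - \<delta> / real d else 0) + (if 4 \<le> i then 2 * pi / real d else 0)"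
definition gN :: "real \<Rightarrow> nat \<Rightarrow> real" where
  "gN \<Delta> i = (if 2 \<le> i mod 4 then - \<Delta> else 0)"
definition WG :: "nat \<Rightarrow> nat \<Rightarrow> real \<Rightarrow> real \<Rightarrow> nat \<Rightarrow> nat \<Rightarrow> real" where
  "WG K d \<Delta> \<delta> i j = cat K (\<lambda>j. - \<Delta>) (cat K (\<lambda>j. \<Delta>) (\<lambda>t. if t = 0 then gH d \<delta> i else gN \<Delta> i)) j"

definition core :: "nat \<Rightarrow> nat \<Rightarrow> real \<Rightarrow> real \<Rightarrow> real \<Rightarrow> layer list" where
  "core K d hl D M = [mk_layer (K*d) (K+K) (W1 K d hl) (b1 K), mk_layer (K+K) (K+K) (W2 K hl) (\<lambda>_. 0),
     mk_layer (K+K) (K+(K+K)) (W3 K D) (\<lambda>_. 0), mk_layer (K+(K+K)) (K+(K+2)) (W4 K M) (\<lambda>_. 0)]"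

definition netA :: "nat \<Rightarrow> nat \<Rightarrow> real \<Rightarrow> real \<Rightarrow> real \<Rightarrow> layer list" where
  "netA K d hl D M = core K d hl D M @ [mk_layer (K+(K+2)) 8 (WA K d) (\<lambda>_. 0)]"
definition netG :: "nat \<Rightarrow> nat \<Rightarrow> real \<Rightarrow> real \<Rightarrow> real \<Rightarrow> real \<Rightarrow> real \<Rightarrow> layer list" where
  "netG K d hl D M \<Delta> \<delta> = core K d hl D M @ [mk_layer (K+(K+2)) 8 (WG K d \<Delta> \<delta>) (\<lambda>_. 0)]"


lemma core_eval:
  fixes s :: "nat \<Rightarrow> real" and K d :: nat and hl D M :: real and L5 :: layer
    and C R E Q Aa Bb V4 :: "nat \<Rightarrow> real" and SC SQ Hr Nr :: real
  assumes K: "0 < K" and s: "\<And>j. 0 \<le> s j"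
  assumes C_def: "C = (\<lambda>i. \<Sum>j\<in>{i*d..<i*d+d}. s j)"
  assumes R_def: "R = (\<lambda>i. max 0 (C i / hl - 1))"
  assumes E_def: "E = (\<lambda>i. max 0 ((C i - C (pv K i)) / hl + (R (pv K i) - R i)))"
  assumes Q_def: "Q = (\<lambda>i. max 0 (C i - D * E (pv K i)))"
  assumes SC_def: "SC = (\<Sum>j<K. C j)"
  assumes SQ_def: "SQ = (\<Sum>j<K. Q j)"
  assumes Aa_def: "Aa = (\<lambda>i. max 0 (real (i+1) * (SC - SQ) - C i))"
  assumes Bb_def: "Bb = (\<lambda>i. max 0 (real (i+1) * (SC - SQ) - C i - M * E i))"
  assumes Hr_def: "Hr = (max 0 (SC - SQ))"
  assumes Nr_def: "Nr = (max 0 SC)"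
  assumes V4_def: "V4 = (cat K Aa (cat K Bb (\<lambda>t. if t = 0 then Hr else Nr)))"
  shows "nn_eval (core K d hl D M @ [L5]) (map s [0..<K*d]) = affine L5 (map V4 [0..<K+(K+2)])"
proof -
  have C0: "0 \<le> C i" for i unfolding C_def by (rule sum_nonneg) (simp add: s)
  have s1: "relu_vec (affine (mk_layer (K*d) (K+K) (W1 K d hl) (b1 K)) (map s [0..<K*d])) = map (cat K C R) [0..<K+K]"
  proof (rule layer_step)
    fix i assume i: "i < K+K"
    show "max 0 ((\<Sum>j<K*d. W1 K d hl i j * s j) + b1 K i) = cat K C R i"
    proof (cases "i < K")
      case True
      then show ?thesis using C0[of i] by (simp add: W1_def b1_def blk_sum C_def)
    next
      case False
      then have i': "i - K < K" using i by simp
      have "(\<Sum>j<K*d. W1 K d hl i j * s j) = (\<Sum>j<K*d. blk d (i-K) j * s j) / hl"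
        using False by (simp add: W1_def sum_divide_distrib)
      then show ?thesis using False i' by (simp add: blk_sum b1_def R_def C_def)
    qed
  qed
  have s2: "relu_vec (affine (mk_layer (K+K) (K+K) (W2 K hl) (\<lambda>_. 0)) (map (cat K C R) [0..<K+K])) = map (cat K C E) [0..<K+K]"
  proof (rule layer_step)
    fix i assume i: "i < K+K"
    show "max 0 ((\<Sum>j<K+K. W2 K hl i j * cat K C R j) + 0) = cat K C E i"
    proof (cases "i < K")
      case True
      then show ?thesis using C0[of i] by (simp add: W2_def sum_cat)
    next
      case False
      then have i': "i - K < K" using i by simp
      have p: "pv K (i-K) < K" using pv_lt[OF K i'] .
      show ?thesis using False i' p
        by (simp add: W2_def sum_cat sum_dl_diff_div sum_dl_diff E_def)
    qed
  qed
  have s3: "relu_vec (affine (mk_layer (K+K) (K+(K+K)) (W3 K D) (\<lambda>_. 0)) (map (cat K C E) [0..<K+K])) = map (cat K C (cat K E Q)) [0..<K+(K+K)]"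
  proof (rule layer_step)
    fix i assume i: "i < K+(K+K)"
    have E0: "0 \<le> E i" for i by (simp add: E_def)
    show "max 0 ((\<Sum>j<K+K. W3 K D i j * cat K C E j) + 0) = cat K C (cat K E Q) i"
    proof (cases "i < K")
      case True
      then show ?thesis using C0[of i] by (simp add: W3_def sum_cat)
    next
      case False
      show ?thesis
      proof (cases "i < K+K")
        case True
        then have i': "i - K < K" using False by simp
        then show ?thesis using False True E0[of "i-K"] by (simp add: W3_def sum_cat)
      next
        case False2: False
        then have i': "i - K - K < K" using i by simp
        have p: "pv K (i-K-K) < K" using pv_lt[OF K i'] .
        have e: "i - K - K = i - (K+K)" by simp
        have dd: "(\<Sum>j<K. (- D * dl (pv K (i-K-K)) j) * E j) = - D * E (pv K (i-K-K))"
        proof -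
          have "(\<Sum>j<K. (- D * dl (pv K (i-K-K)) j) * E j) = - D * (\<Sum>j<K. dl (pv K (i-K-K)) j * E j)"
            by (simp add: sum_distrib_left algebra_simps)
          then show ?thesis using p by simp
        qed
        have "(\<Sum>j<K+K. W3 K D i j * cat K C E j) = C (i-K-K) + (- D * E (pv K (i-K-K)))"
          using False False2 i' p unfolding W3_def by (simp only: if_False sum_cat dd sum_dl)
        then show ?thesis using False False2 by (simp add: Q_def)
      qed
    qed
  qed
  have s4: "relu_vec (affine (mk_layer (K+(K+K)) (K+(K+2)) (W4 K M) (\<lambda>_. 0)) (map (cat K C (cat K E Q)) [0..<K+(K+K)])) = map V4 [0..<K+(K+2)]"
  proof (rule layer_step)
    fix i assume i: "i < K+(K+2)"
    show "max 0 ((\<Sum>j<K+(K+K). W4 K M i j * cat K C (cat K E Q) j) + 0) = V4 i"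
    proof (cases "i < K")
      case True
      have "(\<Sum>j<K. (real (i+1) - dl i j) * C j) = real (i+1) * SC - C i"
        using True by (simp add: left_diff_distrib sum_subtractf SC_def sum_distrib_left)
      moreover have "(\<Sum>j<K. - real (i+1) * Q j) = - real (i+1) * SQ"
        by (simp add: SQ_def sum_distrib_left)
      ultimately show ?thesis using True
        by (simp add: W4_def sum_cat V4_def Aa_def algebra_simps)
    next
      case False
      show ?thesis
      proof (cases "i < K+K")
        case True
        then have i': "i - K < K" using False by simp
        have h1: "(\<Sum>j<K. (real (i-K+1) - dl (i-K) j) * C j) = real (i-K+1) * SC - C (i-K)"
          using i' by (simp add: left_diff_distrib sum_subtractf SC_def sum_distrib_left)
        have h2: "(\<Sum>j<K. - real (i-K+1) * Q j) = - real (i-K+1) * SQ"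
          by (simp add: SQ_def sum_distrib_left)
        have h3: "(\<Sum>j<K. (- M * dl (i-K) j) * E j) = - M * E (i-K)"
        proof -
          have "(\<Sum>j<K. (- M * dl (i-K) j) * E j) = - M * (\<Sum>j<K. dl (i-K) j * E j)"
            by (simp add: sum_distrib_left algebra_simps)
          then show ?thesis using i' by simp
        qed
        have eq: "(\<Sum>j<K+(K+K). W4 K M i j * cat K C (cat K E Q) j)
            = (real (i-K+1) * SC - C (i-K)) + ((- M * E (i-K)) + (- real (i-K+1) * SQ))"
          using True False unfolding W4_def by (simp only: if_False if_True sum_cat h1 h2 h3)
        have ct: "cat K Aa (cat K Bb (\<lambda>t. if t = 0 then Hr else Nr)) i = Bb (i-K)"
          using True False by simp
        have alg: "(real (i-K+1) * SC - C (i-K)) + ((- M * E (i-K)) + (- real (i-K+1) * SQ))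
           = real (i-K+1) * (SC - SQ) - C (i-K) - M * E (i-K)"
          by (simp add: algebra_simps)
        have "max 0 ((\<Sum>j<K+(K+K). W4 K M i j * cat K C (cat K E Q) j) + 0) = Bb (i-K)"
          unfolding Bb_def by (simp only: eq alg add_0_right)
        then show ?thesis using ct by (simp only: V4_def)
      next
        case False2: False
        show ?thesis
        proof (cases "i = K+K")
          case True
          then show ?thesis
            by (simp add: W4_def sum_cat V4_def Hr_def SC_def SQ_def sum_negf)
        next
          case False3: False
          then have "i = K+K+1" using i False2 by simp
          then show ?thesis
            by (simp add: W4_def sum_cat V4_def Nr_def SC_def)
        qed
      qed
    qed
  qed
  show ?thesis
    unfolding core_def by (simp only: append_Cons append_Nil nn_eval.simps s1 s2 s3 s4)
qed


lemma final_A: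
  "affine (mk_layer (K+(K+2)) 8 (WA K d) (\<lambda>_. 0)) (map (cat K Aa (cat K Bb (\<lambda>t. if t = 0 then Hr else Nr))) [0..<K+(K+2)])
    = map (\<lambda>i. Hr / real d) [0..<8]"
proof -
  have hs: "(\<Sum>j<K+(K+2). WA K d i j * cat K Aa (cat K Bb (\<lambda>t. if t = 0 then Hr else Nr)) j) = Hr / real d" for i
    unfolding WA_def by (simp add: sum_cat)
  show ?thesis unfolding affine_mk by (simp only: hs add_0_right)
qed

lemma final_G:
  "affine (mk_layer (K+(K+2)) 8 (WG K d \<Delta> \<delta>) (\<lambda>_. 0)) (map (cat K Aa (cat K Bb (\<lambda>t. if t = 0 then Hr else Nr))) [0..<K+(K+2)])
    = map (\<lambda>i. - \<Delta> * (\<Sum>j<K. Aa j) + \<Delta> * (\<Sum>j<K. Bb j) + gH d \<delta> i * Hr + gN \<Delta> i * Nr) [0..<8]"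
proof -
  have "(\<Sum>j<K+(K+2). WG K d \<Delta> \<delta> i j * cat K Aa (cat K Bb (\<lambda>t. if t = 0 then Hr else Nr)) j)
      = - \<Delta> * (\<Sum>j<K. Aa j) + \<Delta> * (\<Sum>j<K. Bb j) + gH d \<delta> i * Hr + gN \<Delta> i * Nr" for i
    unfolding WG_def by (simp add: sum_cat sum_distrib_left sum_negf)
  then show ?thesis unfolding affine_mk by (simp only: add_0_right)
qed

lemma core_sem:
  fixes C :: "nat \<Rightarrow> real" and cnt :: "nat \<Rightarrow> nat"
    and R E Q Aa Bb :: "nat \<Rightarrow> real" and SC SQ Hr Nr :: real
  assumes K: "2 \<le> K" and hl: "0 < hl" "hl \<le> h" "h \<le> hh"
    and C: "\<And>i. i < K \<Longrightarrow> C i = h * real (cnt i)"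
    and cd: "\<And>i. i < K \<Longrightarrow> cnt i \<le> d"
    and i0: "i0 < K" "0 < cnt i0" "cnt (pv K i0) = 0"
    and P5: "\<And>i. i < K \<Longrightarrow> i \<noteq> i0 \<Longrightarrow> 0 < cnt i \<Longrightarrow> 0 < cnt (pv K i)"
    and P3: "\<And>j. j < K \<Longrightarrow> pv K j = i0 \<Longrightarrow> cnt j = d"
    and D: "D = hh * real d" and M: "hh * real K * real d \<le> M"
  assumes R_def: "R = (\<lambda>i. max 0 (C i / hl - 1))"
  assumes E_def: "E = (\<lambda>i. max 0 ((C i - C (pv K i)) / hl + (R (pv K i) - R i)))"
  assumes Q_def: "Q = (\<lambda>i. max 0 (C i - D * E (pv K i)))"
  assumes SC_def: "SC = (\<Sum>j<K. C j)"
  assumes SQ_def: "SQ = (\<Sum>j<K. Q j)"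
  assumes Aa_def: "Aa = (\<lambda>i. max 0 (real (i+1) * (SC - SQ) - C i))"
  assumes Bb_def: "Bb = (\<lambda>i. max 0 (real (i+1) * (SC - SQ) - C i - M * E i))"
  assumes Hr_def: "Hr = (max 0 (SC - SQ))"
  assumes Nr_def: "Nr = (max 0 SC)"
  shows "Hr = h * real d" and "Nr = h * real (\<Sum>j<K. cnt j)"
    and "(\<Sum>j<K. Aa j) - (\<Sum>j<K. Bb j) = h * (real ((i0+1)*d) - real (cnt i0))"
proof -
  have h0: "0 < h" using hl by simp
  define Z where "Z i = (if 0 < cnt i then 1 else (0::real))" for i
  have RZ: "C i / hl - R i = Z i" if "i < K" for i
  proof (cases "0 < cnt i")
    case True
    then have "h \<le> C i" using C[OF that] h0 by (simp add: mult_le_cancel_left1)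
    then have "1 \<le> C i / hl" using hl by (simp add: le_divide_eq)
    then show ?thesis using True by (simp add: R_def Z_def)
  next
    case False
    then show ?thesis using C[OF that] by (simp add: R_def Z_def)
  qed
  have pvK: "pv K i < K" if "i < K" for i using pv_lt[of K i] K that by simp
  have E_eq: "E i = (if i = i0 then 1 else 0)" if i: "i < K" for i
  proof -
    have "E i = max 0 (Z i - Z (pv K i))"
      unfolding E_def using RZ[OF i] RZ[OF pvK[OF i]] by (simp add: diff_divide_distrib algebra_simps)
    then show ?thesis using i0 P5[OF i] by (auto simp: Z_def)
  qed
  define nx where "nx = (if i0 + 1 = K then 0 else i0 + 1)"
  have nxK: "nx < K" using i0 K by (simp add: nx_def)
  have pv_nx: "pv K j = i0 \<longleftrightarrow> j = nx" if "j < K" for j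
    using that i0 K unfolding pv_def nx_def by auto
  have CQ: "C j - Q j = (if j = nx then h * real d else 0)" if j: "j < K" for j
  proof (cases "j = nx")
    case True
    then have "cnt j = d" using P3 j pv_nx by simp
    then have "C j = h * real d" using C j by simp
    moreover have "E (pv K j) = 1" using E_eq[OF pvK[OF j]] True pv_nx[OF j] by simp
    moreover have "h * real d \<le> hh * real d" using hl by (simp add: mult_right_mono)
    ultimately show ?thesis using True D by (simp add: Q_def)
  next
    case False
    have "E (pv K j) = 0" using E_eq[OF pvK[OF j]] False pv_nx[OF j] by simp
    moreover have "0 \<le> C j" using C[OF j] h0 by simp
    ultimately show ?thesis using False by (simp add: Q_def)
  qed
  have SCQ: "SC - SQ = h * real d"
  proof -
    have "SC - SQ = (\<Sum>j<K. C j - Q j)" by (simp add: SC_def SQ_def sum_subtractf)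
    also have "\<dots> = (\<Sum>j<K. if j = nx then h * real d else 0)" by (rule sum.cong) (simp_all add: CQ)
    also have "\<dots> = h * real d" using nxK by simp
    finally show ?thesis .
  qed
  show "Hr = h * real d" using SCQ h0 by (simp add: Hr_def)
  show "Nr = h * real (\<Sum>j<K. cnt j)"
  proof -
    have "SC = h * real (\<Sum>j<K. cnt j)" by (simp add: SC_def C sum_distrib_left)
    moreover have "0 \<le> h * real (\<Sum>j<K. cnt j)" using h0 by (simp del: of_nat_sum)
    ultimately show ?thesis by (simp only: Nr_def max_absorb2)
  qed
  have AB: "Aa j - Bb j = (if j = i0 then h * (real ((i0+1)*d) - real (cnt i0)) else 0)" if j: "j < K" for j
  proof -
    have Cj: "C j \<le> h * real d" using C[OF j] cd[OF j] h0 by simp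
    have X0: "0 \<le> real (j+1) * (SC - SQ) - C j"
    proof -
      have "h * real d \<le> real (j+1) * (h * real d)" using h0 mult_right_mono[of 1 "real (j+1)" "h * real d"] by simp
      then show ?thesis using SCQ Cj by simp
    qed
    show ?thesis
    proof (cases "j = i0")
      case True
      have "real (j+1) * (SC - SQ) \<le> M"
      proof -
        have "real (j+1) * (h * real d) \<le> real K * (hh * real d)"
          using j hl by (intro mult_mono) (auto simp: mult_right_mono)
        then show ?thesis using SCQ M by (simp add: algebra_simps)
      qed
      moreover have "0 \<le> C j" using C[OF j] h0 by simp
      ultimately have "Bb j = 0" using E_eq[OF j] True by (simp add: Bb_def)
      then show ?thesis using True X0 SCQ C[OF j] by (simp add: Aa_def algebra_simps)
    next
      case False
      then show ?thesis using E_eq[OF j] by (simp add: Aa_def Bb_def)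
    qed
  qed
  have "(\<Sum>j<K. Aa j) - (\<Sum>j<K. Bb j) = (\<Sum>j<K. Aa j - Bb j)" by (simp add: sum_subtractf)
  also have "\<dots> = (\<Sum>j<K. if j = i0 then h * (real ((i0+1)*d) - real (cnt i0)) else 0)"
    by (rule sum.cong) (simp_all add: AB)
  also have "\<dots> = h * (real ((i0+1)*d) - real (cnt i0))" using i0 by simp
  finally show "(\<Sum>j<K. Aa j) - (\<Sum>j<K. Bb j) = h * (real ((i0+1)*d) - real (cnt i0))" .
qed


lemma blk_iff: "0 < (d::nat) \<Longrightarrow> (i*d \<le> j \<and> j < i*d + d) \<longleftrightarrow> j div d = i"
  by (metis add_diff_inverse_nat diff_add_inverse2 div_less_iff_less_mult
    div_times_less_eq_dividend le_less_Suc_eq less_eq_div_iff_mult_less_eq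
    mult_Suc not_add_less2)

definition inarc :: "nat \<Rightarrow> nat \<Rightarrow> nat \<Rightarrow> nat \<Rightarrow> bool" where
  "inarc m L n j \<longleftrightarrow> (L \<le> j \<and> j < L + n) \<or> j + m < L + n"

definition cntb :: "nat \<Rightarrow> (nat \<Rightarrow> bool) \<Rightarrow> nat \<Rightarrow> nat" where
  "cntb d P i = card {j\<in>{i*d..<i*d+d}. P j}"

lemma card_filter_sum: "finite A \<Longrightarrow> card {j\<in>A. P j} = (\<Sum>j\<in>A. if P j then 1 else 0)"
proof -
  assume "finite A"
  have "{j\<in>A. P j} = A \<inter> Collect P" by auto
  then show ?thesis using \<open>finite A\<close> by (simp add: sum.If_cases)
qed

lemma cntb_le: "cntb d P i \<le> d"
proof -
  have "cntb d P i \<le> card {i*d..<i*d+d}" unfolding cntb_def by (rule card_mono) auto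
  then show ?thesis by simp
qed

lemma cntb_pos: "j \<in> {i*d..<i*d+d} \<Longrightarrow> P j \<Longrightarrow> 0 < cntb d P i"
  unfolding cntb_def by (subst card_gt_0_iff) auto

lemma cntb_full: "(\<And>j. j \<in> {i*d..<i*d+d} \<Longrightarrow> P j) \<Longrightarrow> cntb d P i = d"
proof -
  assume a: "\<And>j. j \<in> {i*d..<i*d+d} \<Longrightarrow> P j"
  have "{j\<in>{i*d..<i*d+d}. P j} = {i*d..<i*d+d}" using a by auto
  then show ?thesis unfolding cntb_def by simp
qed

lemma cntb_zero: "(\<And>j. j \<in> {i*d..<i*d+d} \<Longrightarrow> \<not> P j) \<Longrightarrow> cntb d P i = 0"
proof -
  assume a: "\<And>j. j \<in> {i*d..<i*d+d} \<Longrightarrow> \<not> P j"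
  have "{j\<in>{i*d..<i*d+d}. P j} = {}" using a by auto
  then show ?thesis unfolding cntb_def by simp
qed

lemma sum_blocks: "(\<Sum>i<K. \<Sum>j\<in>{i*d..<i*d+d}. f j) = (\<Sum>j<K*(d::nat). (f j::'a::comm_monoid_add))"
proof (induction K)
  case 0 then show ?case by simp
next
  case (Suc K)
  have "{..<Suc K * d} = {..<K*d} \<union> {K*d..<K*d+d}" by auto
  moreover have "{..<K*d} \<inter> {K*d..<K*d+d} = {}" by auto
  ultimately have "(\<Sum>j<Suc K * d. f j) = (\<Sum>j<K*d. f j) + (\<Sum>j\<in>{K*d..<K*d+d}. f j)"
    by (simp add: sum.union_disjoint)
  then show ?case using Suc by simp
qed

lemma arc_comb:
  fixes K d m L n :: nat
  assumes K: "3 \<le> K" and d: "1 \<le> d" and m: "m = K*d" and L: "L < m"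
    and n1: "2*d \<le> n" and n2: "n + 2*d \<le> m"
  defines "P \<equiv> inarc m L n"
  defines "i0 \<equiv> L div d"
  shows "i0 < K"
    and "cntb d P i0 = (i0+1)*d - L"
    and "0 < cntb d P i0"
    and "cntb d P (pv K i0) = 0"
    and "\<And>i. i < K \<Longrightarrow> i \<noteq> i0 \<Longrightarrow> 0 < cntb d P i \<Longrightarrow> 0 < cntb d P (pv K i)"
    and "\<And>j. j < K \<Longrightarrow> pv K j = i0 \<Longrightarrow> cntb d P j = d"
    and "(\<Sum>i<K. cntb d P i) = n"
proof -
  have d0: "0 < d" using d by simp
  have bi: "\<And>i j. j \<in> {i*d..<i*d+d} \<longleftrightarrow> j div d = i" using blk_iff[OF d0] by auto
  have Li0: "i0*d \<le> L" "L < i0*d + d" using bi[of L i0] by (auto simp: i0_def)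
  show i0K: "i0 < K" using L m d0 by (simp add: i0_def less_mult_imp_div_less)
  have Kd: "(K - 1) * d + d = m" using K m by (metis Suc_diff_1 add.commute less_le_trans mult_Suc zero_less_numeral)
  have blk0: "{j\<in>{i0*d..<i0*d+d}. P j} = {L..<i0*d+d}"
  proof -
    have "P j \<longleftrightarrow> L \<le> j" if "j \<in> {i0*d..<i0*d+d}" for j
      using that Li0 n1 n2 unfolding P_def inarc_def by auto
    then show ?thesis using Li0 by auto
  qed
  show c0: "cntb d P i0 = (i0+1)*d - L" unfolding cntb_def blk0 by simp
  then show "0 < cntb d P i0" using Li0 by simp
  show "cntb d P (pv K i0) = 0"
  proof (cases "i0 = 0")
    case True
    then have "pv K i0 = K - 1" by (simp add: pv_def)
    moreover have "(K-1)*d \<ge> 2*d" using K by (intro mult_right_mono) auto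
    ultimately show ?thesis using True Li0 Kd n2 by (intro cntb_zero) (auto simp: P_def inarc_def)
  next
    case False
    then have "pv K i0 = i0 - 1" by (simp add: pv_def)
    moreover have "(i0-1)*d + d = i0*d" using False by (metis Suc_diff_1 add.commute mult_Suc neq0_conv)
    ultimately show ?thesis using Li0 n2 by (intro cntb_zero) (auto simp: P_def inarc_def)
  qed
  show "cntb d P j = d" if j: "j < K" and pj: "pv K j = i0" for j
  proof (cases "j = 0")
    case True
    then have "i0 = K - 1" using pj by (simp add: pv_def)
    then have "m - d \<le> L" using Li0 Kd by simp
    then show ?thesis using True n1 by (intro cntb_full) (auto simp: P_def inarc_def)
  next
    case False
    then have "j = i0 + 1" using pj by (simp add: pv_def)
    then show ?thesis using Li0 n1 by (intro cntb_full) (auto simp: P_def inarc_def)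
  qed
  show "0 < cntb d P (pv K i)" if i: "i < K" and ii0: "i \<noteq> i0" and pos: "0 < cntb d P i" for i
  proof (cases "pv K i = i0")
    case True then show ?thesis using c0 Li0 by simp
  next
    case pvne: False
    from pos obtain j where j: "j \<in> {i*d..<i*d+d}" "P j"
      unfolding cntb_def by (metis (no_types, lifting) card.empty empty_Collect_eq less_irrefl)
    show ?thesis
    proof (cases "i = 0")
      case True
      then have pvi: "pv K i = K - 1" by (simp add: pv_def)
      have "i0 \<noteq> K - 1" using pvne pvi by simp
      then have "i0 + 1 \<le> K - 1" using i0K by simp
      then have "(i0+1)*d \<le> (K-1)*d" by (rule mult_right_mono) simp
      then have Lsmall: "L + d < m" using Li0 Kd by simp
      have nfirst: "\<not> (L \<le> j \<and> j < L + n)"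
      proof
        assume "L \<le> j \<and> j < L + n"
        then have "L < d" using j True by simp
        then have "i0 = 0" by (simp add: i0_def)
        then show False using True ii0 by simp
      qed
      then have jm: "j + m < L + n" using j(2) unfolding P_def inarc_def by blast
      have "j + m - d \<in> {(K-1)*d..<(K-1)*d+d}" using j True Kd d0 by auto
      moreover have "P (j + m - d)" using jm Lsmall unfolding P_def inarc_def by auto
      ultimately show ?thesis using pvi by (metis cntb_pos)
    next
      case False
      then have pvi: "pv K i = i - 1" by (simp add: pv_def)
      have id: "(i-1)*d + d = i*d" using False by (metis Suc_diff_1 add.commute mult_Suc neq0_conv)
      have jd: "j - d \<in> {(i-1)*d..<(i-1)*d+d}" using j id by auto
      show ?thesis
      proof (cases "L \<le> j \<and> j < L + n")
        case True
        show ?thesis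
        proof (cases "L + d \<le> j")
          case True2: True
          then have "P (j - d)" using True unfolding P_def inarc_def by auto
          then show ?thesis using jd pvi by (metis cntb_pos)
        next
          case False2: False
          have "j div d \<le> (L + d) div d" using False2 by (intro div_le_mono) simp
          then have "i \<le> i0 + 1" using bi j d0 by (simp add: i0_def div_add_self2)
          moreover have "i0 \<le> i" using True bi j by (metis div_le_mono i0_def)
          ultimately have "i = i0 + 1" using ii0 by simp
          then show ?thesis using pvi pvne by simp
        qed
      next
        case False2: False
        then have "j + m < L + n" using j(2) unfolding P_def inarc_def by blast
        moreover have "d \<le> j" using j id by auto
        ultimately have "P (j - d)" unfolding P_def inarc_def by auto
        then show ?thesis using jd pvi by (metis cntb_pos)
      qed
    qed
  qed
  show "(\<Sum>i<K. cntb d P i) = n"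
  proof -
    have "(\<Sum>i<K. cntb d P i) = (\<Sum>i<K. \<Sum>j\<in>{i*d..<i*d+d}. if P j then 1 else 0)"
      unfolding cntb_def by (simp only: card_filter_sum finite_atLeastLessThan)
    also have "\<dots> = (\<Sum>j<m. if P j then 1 else 0)" using m by (simp add: sum_blocks)
    also have "\<dots> = card {j\<in>{..<m}. P j}" by (simp only: card_filter_sum finite_lessThan)
    also have "\<dots> = n"
    proof (cases "L + n \<le> m")
      case True
      then have "{j\<in>{..<m}. P j} = {L..<L+n}" unfolding P_def inarc_def by auto
      then show ?thesis by simp
    next
      case False
      then have "{j\<in>{..<m}. P j} = {L..<m} \<union> {..<L+n-m}" using L n2 unfolding P_def inarc_def by auto
      moreover have "{L..<m} \<inter> {..<L+n-m} = {}" using n2 by auto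
      ultimately have "card {j\<in>{..<m}. P j} = (m - L) + (L + n - m)"
        by (simp add: card_Un_disjoint)
      then show ?thesis using L False by simp
    qed
    finally show ?thesis .
  qed
qed


definition rr :: "real \<Rightarrow> real \<Rightarrow> real" where
  "rr \<delta> t = max 0 t - max 0 (t - \<delta>)"

lemma rr_lo: "t \<le> 0 \<Longrightarrow> 0 < \<delta> \<Longrightarrow> rr \<delta> t = 0" by (simp add: rr_def)
lemma rr_hi: "\<delta> \<le> t \<Longrightarrow> 0 < \<delta> \<Longrightarrow> rr \<delta> t = \<delta>" by (simp add: rr_def)
lemma rr_bounds: "0 < \<delta> \<Longrightarrow> 0 \<le> rr \<delta> t \<and> rr \<delta> t \<le> \<delta>" by (auto simp: rr_def max_def)
lemma rr_mono: "0 < \<delta> \<Longrightarrow> s \<le> t \<Longrightarrow> rr \<delta> s \<le> rr \<delta> t" by (simp add: rr_def)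

definition GG :: "real \<Rightarrow> real \<Rightarrow> real \<Rightarrow> real \<Rightarrow> real" where
  "GG \<delta> PL PR t = (rr \<delta> (t - PL) - rr \<delta> (t - PR)) / \<delta>"

lemma GG_bounds:
  assumes "0 < \<delta>" "PL \<le> PR"
  shows "0 \<le> GG \<delta> PL PR t \<and> GG \<delta> PL PR t \<le> 1"
proof -
  have "rr \<delta> (t - PR) \<le> rr \<delta> (t - PL)" using assms by (intro rr_mono) auto
  then show ?thesis using rr_bounds[OF assms(1), of "t - PL"] rr_bounds[OF assms(1), of "t - PR"] assms(1)
    by (auto simp: GG_def divide_le_eq)
qed

lemma GG_ind:
  assumes d: "0 < \<delta>" and o: "\<beta>0 \<le> PL" "\<beta>0 + w < PR" and w0: "0 \<le> w"
    and t1: "t \<notin> {\<beta>0..PL+\<delta>}" and t2: "t \<notin> {\<beta>0+w..PR+\<delta>}"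
  shows "GG \<delta> PL PR t = (if \<beta>0 \<le> t \<and> t \<le> \<beta>0 + w then 1 else 0)"
proof (cases "t < \<beta>0")
  case True
  then show ?thesis using o d w0 by (simp add: GG_def rr_lo)
next
  case False
  then have tb: "PL + \<delta> < t" using t1 by auto
  show ?thesis
  proof (cases "t < \<beta>0 + w")
    case True
    then show ?thesis using tb o d False by (simp add: GG_def rr_lo rr_hi)
  next
    case False2: False
    then have "PR + \<delta> < t" using t2 by auto
    then show ?thesis using tb o d False2 by (simp add: GG_def rr_hi)
  qed
qed

lemma T_two:
  assumes w: "0 < w" "w < 2*pi" and b: "- \<Delta> < \<beta>0" "\<beta>0 < 2*pi" and y: "0 \<le> y" "y < 2*pi - \<Delta>"
  shows "(\<exists>k::int. \<beta>0 + 2*pi*k \<le> y \<and> y \<le> \<beta>0 + w + 2*pi*k) \<longleftrightarrow>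
     (\<beta>0 \<le> y \<and> y \<le> \<beta>0 + w) \<or> (\<beta>0 \<le> y + 2*pi \<and> y + 2*pi \<le> \<beta>0 + w)"
proof
  assume "\<exists>k::int. \<beta>0 + 2*pi*k \<le> y \<and> y \<le> \<beta>0 + w + 2*pi*k"
  then obtain k :: int where k: "\<beta>0 + 2*pi*k \<le> y" "y \<le> \<beta>0 + w + 2*pi*k" by blast
  have "k \<le> 0"
  proof (rule ccontr)
    assume "\<not> k \<le> 0"
    then have "1 \<le> real_of_int k" by simp
    then have "2*pi \<le> 2*pi*k" by simp
    then show False using k b y by linarith
  qed
  moreover have "k \<ge> -1"
  proof (rule ccontr)
    assume "\<not> k \<ge> -1"
    then have "real_of_int k \<le> -2" by simp
    then have "2*pi*k \<le> -4*pi" by (simp add: mult_le_cancel_left_pos[of "2*pi" "real_of_int k" "-2", simplified])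
    then show False using k b y w by linarith
  qed
  ultimately have "k = 0 \<or> k = -1" by linarith
  then show "(\<beta>0 \<le> y \<and> y \<le> \<beta>0 + w) \<or> (\<beta>0 \<le> y + 2*pi \<and> y + 2*pi \<le> \<beta>0 + w)"
    using k by auto
next
  assume "(\<beta>0 \<le> y \<and> y \<le> \<beta>0 + w) \<or> (\<beta>0 \<le> y + 2*pi \<and> y + 2*pi \<le> \<beta>0 + w)"
  then show "\<exists>k::int. \<beta>0 + 2*pi*k \<le> y \<and> y \<le> \<beta>0 + w + 2*pi*k"
  proof
    assume "\<beta>0 \<le> y \<and> y \<le> \<beta>0 + w" then show ?thesis by (intro exI[of _ 0]) simp
  next
    assume "\<beta>0 \<le> y + 2*pi \<and> y + 2*pi \<le> \<beta>0 + w" then show ?thesis by (intro exI[of _ "-1"]) simp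
  qed
qed

lemma L1_err:
  fixes h w \<delta> \<Delta> \<beta>0 PL PR :: real
  assumes h: "0 < h" and w: "0 < w" "w < 2*pi" and d: "0 < \<delta>" and D: "0 < \<Delta>" "\<Delta> \<le> w"
    and o: "\<beta>0 \<le> PL" "PL < \<beta>0 + \<Delta>" "0 \<le> PL" "PL < 2*pi" "\<beta>0 + w < PR" "PR \<le> \<beta>0 + w + \<Delta>"
  defines "T \<equiv> \<lambda>y. if \<exists>k::int. \<beta>0 + 2*pi*k \<le> y \<and> y \<le> \<beta>0 + w + 2*pi*k then h else 0"
  defines "Out \<equiv> \<lambda>y. h * (GG \<delta> PL PR y + GG \<delta> PL PR (y + 2*pi))"
  shows "(\<integral>\<^sup>+ y. ennreal \<bar>T y - Out y\<bar> * indicator {0..2*pi} y \<partial>lborel) \<le> ennreal (10 * h * (\<Delta> + \<delta>))"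
proof -
  define B where "B i = (if i = 0 then {2*pi - \<Delta>..2*pi} else if i = 1 then {\<beta>0..PL+\<delta>}
     else if i = 2 then {\<beta>0+w..PR+\<delta>} else if i = 3 then {\<beta>0 - 2*pi..PL+\<delta>-2*pi}
     else {\<beta>0+w-2*pi..PR+\<delta>-2*pi})" for i :: nat
  have PLR: "PL \<le> PR" using o D by linarith
  have TO: "\<bar>T y - Out y\<bar> \<le> 2*h" for y
  proof -
    have "0 \<le> Out y \<and> Out y \<le> 2*h"
      using GG_bounds[OF d PLR, of y] GG_bounds[OF d PLR, of "y + 2*pi"] h
      by (auto simp: Out_def intro!: mult_nonneg_nonneg)
    then show ?thesis using h by (auto simp: T_def)
  qed
  have pw: "ennreal \<bar>T y - Out y\<bar> * indicator {0..2*pi} y \<le> (\<Sum>i<5. ennreal (2*h) * indicator (B i) y)" for y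
  proof (cases "y \<in> {0..2*pi}")
    case False then show ?thesis by simp
  next
    case yin: True
    show ?thesis
    proof (cases "\<exists>i<5. y \<in> B i")
      case True
      then obtain i where i: "i < 5" "y \<in> B i" by blast
      have "ennreal \<bar>T y - Out y\<bar> * indicator {0..2*pi} y \<le> ennreal (2*h)"
        using yin TO[of y] by (simp add: ennreal_leI)
      also have "\<dots> = ennreal (2*h) * indicator (B i) y" using i by simp
      also have "\<dots> \<le> (\<Sum>i<5. ennreal (2*h) * indicator (B i) y)"
        by (rule member_le_sum) (use i in auto)
      finally show ?thesis .
    next
      case False
      then have nB: "y \<notin> B i" if "i < 5" for i using that by blast
      have y0: "y \<notin> {2*pi - \<Delta>..2*pi}" using nB[of 0] by (simp add: B_def)
      have y1: "y \<notin> {\<beta>0..PL+\<delta>}" using nB[of 1] by (simp add: B_def)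
      have y2: "y \<notin> {\<beta>0+w..PR+\<delta>}" using nB[of 2] by (simp add: B_def)
      have y3: "y + 2*pi \<notin> {\<beta>0..PL+\<delta>}" using nB[of 3] by (simp add: B_def) linarith
      have y4: "y + 2*pi \<notin> {\<beta>0+w..PR+\<delta>}" using nB[of 4] by (simp add: B_def) linarith
      have yl: "y < 2*pi - \<Delta>" using y0 yin by auto
      have Ty: "T y = h * ((if \<beta>0 \<le> y \<and> y \<le> \<beta>0 + w then 1 else 0) + (if \<beta>0 \<le> y + 2*pi \<and> y + 2*pi \<le> \<beta>0 + w then 1 else 0))"
      proof -
        have ex: "(\<exists>k::int. \<beta>0 + 2*pi*k \<le> y \<and> y \<le> \<beta>0 + w + 2*pi*k) \<longleftrightarrow>
           (\<beta>0 \<le> y \<and> y \<le> \<beta>0 + w) \<or> (\<beta>0 \<le> y + 2*pi \<and> y + 2*pi \<le> \<beta>0 + w)"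
          by (rule T_two) (use w o yin yl in auto)
        have "\<not> ((\<beta>0 \<le> y \<and> y \<le> \<beta>0 + w) \<and> (\<beta>0 \<le> y + 2*pi \<and> y + 2*pi \<le> \<beta>0 + w))" using w by auto
        then show ?thesis unfolding T_def using ex by auto
      qed
      have "Out y = T y"
        unfolding Out_def Ty using GG_ind[OF d o(1) o(5) _ y1 y2] GG_ind[OF d o(1) o(5) _ y3 y4] w by simp
      then show ?thesis by simp
    qed
  qed
  have mB: "B i \<in> sets lborel" for i by (simp add: B_def)
  have mB'[measurable]: "B i \<in> sets borel" for i by (simp add: B_def)
  have "(\<integral>\<^sup>+ y. ennreal \<bar>T y - Out y\<bar> * indicator {0..2*pi} y \<partial>lborel)
      \<le> (\<integral>\<^sup>+ y. (\<Sum>i<5. ennreal (2*h) * indicator (B i) y) \<partial>lborel)"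
    by (rule nn_integral_mono) (rule pw)
  also have "\<dots> = (\<Sum>i<5. \<integral>\<^sup>+ y. ennreal (2*h) * indicator (B i) y \<partial>lborel)"
    by (rule nn_integral_sum) measurable
  also have "\<dots> = (\<Sum>i<5. ennreal (2*h) * emeasure lborel (B i))"
    by (simp add: nn_integral_cmult_indicator mB)
  also have "\<dots> \<le> (\<Sum>i<(5::nat). ennreal (2*h*(\<Delta>+\<delta>)))"
  proof (rule sum_mono)
    fix i :: nat assume "i \<in> {..<5}"
    have "emeasure lborel (B i) \<le> ennreal (\<Delta> + \<delta>)"
    proof -
      consider "i = 0" | "i = 1" | "i = 2" | "i = 3" | "i \<ge> 4" by linarith
      then show ?thesis
      proof cases
        case 1 then show ?thesis using D d by (simp add: B_def del: ennreal_plus)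
      next
        case 2 then show ?thesis using o d D by (simp add: B_def del: ennreal_plus)
      next
        case 3 then show ?thesis using o d D by (simp add: B_def del: ennreal_plus)
      next
        case 4 then show ?thesis using o d D by (simp add: B_def del: ennreal_plus)
      next
        case 5 then show ?thesis using o d D by (simp add: B_def del: ennreal_plus)
      qed
    qed
    then have "ennreal (2*h) * emeasure lborel (B i) \<le> ennreal (2*h) * ennreal (\<Delta> + \<delta>)"
      by (rule mult_left_mono) simp
    also have "\<dots> = ennreal (2*h*(\<Delta>+\<delta>))" by (rule ennreal_mult[symmetric]) (use h d D in auto)
    finally show "ennreal (2*h) * emeasure lborel (B i) \<le> ennreal (2*h*(\<Delta>+\<delta>))" .
  qed
  also have "\<dots> = ennreal (10 * h * (\<Delta> + \<delta>))"
  proof -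
    have "ennreal (10 * h * (\<Delta> + \<delta>)) = ennreal (5 * (2*h*(\<Delta>+\<delta>)))" by (simp add: algebra_simps)
    also have "\<dots> = ennreal 5 * ennreal (2*h*(\<Delta>+\<delta>))" by (rule ennreal_mult) (use h d D in auto)
    finally show ?thesis by simp
  qed
  finally show ?thesis .
qed


lemma sets_unif[measurable_cong]: "sets (unif lo hi) = sets borel"
  by (simp add: unif_def)
lemma space_unif[simp]: "space (unif lo hi) = UNIV"
  by (simp add: unif_def)

lemma unif_prob: "lo \<le> hi \<Longrightarrow> prob_space (unif lo hi)"
proof (cases "lo < hi")
  case True
  then show ?thesis unfolding unif_def by (simp add: prob_space_uniform_measure)
next
  case False
  then show ?thesis unfolding unif_def by (simp add: prob_space_return)
qed

lemma unif_AE: "lo \<le> hi \<Longrightarrow> AE x in unif lo hi. lo \<le> x \<and> x \<le> hi"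
proof (cases "lo < hi")
  case True
  then show ?thesis unfolding unif_def by (auto intro!: AE_uniform_measureI)
next
  case False
  assume "lo \<le> hi"
  then have "lo = hi" using False by simp
  have "AE x in return lborel lo. lo \<le> x \<and> x \<le> hi"
    by (subst AE_return) (auto simp: \<open>lo = hi\<close>)
  then show ?thesis using False unfolding unif_def by simp
qed

lemma AE_pair_fst':
  assumes "prob_space M1" "prob_space M2" and Q: "{x\<in>space (M1 \<Otimes>\<^sub>M M2). Q (fst x)} \<in> sets (M1 \<Otimes>\<^sub>M M2)"
    and "AE x in M1. Q x"
  shows "AE z in M1 \<Otimes>\<^sub>M M2. Q (fst z)"
proof -
  interpret pair_sigma_finite M1 M2
    using assms(1,2) by (simp add: pair_sigma_finite_def prob_space_imp_sigma_finite)
  show ?thesis by (rule AE_pair_measure[OF Q]) (use assms(4) in auto)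
qed

lemma AE_pair_snd':
  assumes "prob_space M1" "prob_space M2" and Q: "{x\<in>space (M1 \<Otimes>\<^sub>M M2). Q (snd x)} \<in> sets (M1 \<Otimes>\<^sub>M M2)"
    and "AE x in M2. Q x"
  shows "AE z in M1 \<Otimes>\<^sub>M M2. Q (snd z)"
proof -
  interpret pair_sigma_finite M1 M2
    using assms(1,2) by (simp add: pair_sigma_finite_def prob_space_imp_sigma_finite)
  show ?thesis by (rule AE_pair_measure[OF Q]) (use assms(4) in auto)
qed

lemma mu_bound:
  assumes hl: "hl \<le> hh" and wl: "wl \<le> wh" and e: "0 \<le> \<epsilon>"
    and F: "\<And>h w \<xi>. hl \<le> h \<Longrightarrow> h \<le> hh \<Longrightarrow> wl \<le> w \<Longrightarrow> w \<le> wh \<Longrightarrow> F (bump h w \<xi>) \<le> ennreal \<epsilon>"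
  shows "mu_expect hl hh wl wh F \<le> ennreal \<epsilon>"
proof -
  define M1 where "M1 = unif hl hh"
  define M2 where "M2 = unif wl wh"
  define M3 where "M3 = unif 0 (2*pi)"
  have p1: "prob_space M1" using hl by (simp add: M1_def unif_prob)
  have p2: "prob_space M2" using wl by (simp add: M2_def unif_prob)
  have p3: "prob_space M3" by (simp add: M3_def unif_prob)
  have p23: "prob_space (M2 \<Otimes>\<^sub>M M3)" using p2 p3 by (rule prob_space_pair)
  have p: "prob_space (M1 \<Otimes>\<^sub>M (M2 \<Otimes>\<^sub>M M3))" using p1 p23 by (rule prob_space_pair)
  have s23: "sets (M2 \<Otimes>\<^sub>M M3) = sets (borel \<Otimes>\<^sub>M borel)"
    by (rule sets_pair_measure_cong) (simp_all add: M2_def M3_def sets_unif)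
  have s: "sets (M1 \<Otimes>\<^sub>M (M2 \<Otimes>\<^sub>M M3)) = sets (borel \<Otimes>\<^sub>M (borel \<Otimes>\<^sub>M borel))"
    by (rule sets_pair_measure_cong) (simp_all add: M1_def sets_unif s23)
  have sp23: "space (M2 \<Otimes>\<^sub>M M3) = UNIV" by (simp add: M2_def M3_def space_pair_measure)
  have sp: "space (M1 \<Otimes>\<^sub>M (M2 \<Otimes>\<^sub>M M3)) = UNIV" using sp23 by (simp add: M1_def space_pair_measure)
  have ae1: "AE z in M1 \<Otimes>\<^sub>M (M2 \<Otimes>\<^sub>M M3). hl \<le> fst z \<and> fst z \<le> hh"
  proof (rule AE_pair_fst'[OF p1 p23])
    have "{x \<in> space (borel \<Otimes>\<^sub>M (borel \<Otimes>\<^sub>M borel)). hl \<le> fst x \<and> fst x \<le> (hh::real)} \<in> sets (borel \<Otimes>\<^sub>M (borel \<Otimes>\<^sub>M (borel::real measure)))"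
      by measurable
    then show "{x \<in> space (M1 \<Otimes>\<^sub>M (M2 \<Otimes>\<^sub>M M3)). hl \<le> fst x \<and> fst x \<le> hh} \<in> sets (M1 \<Otimes>\<^sub>M (M2 \<Otimes>\<^sub>M M3))"
      using s sp by (simp add: space_pair_measure)
    show "AE x in M1. hl \<le> x \<and> x \<le> hh" using unif_AE[OF hl] by (simp only: M1_def)
  qed
  have ae23: "AE z in M2 \<Otimes>\<^sub>M M3. wl \<le> fst z \<and> fst z \<le> wh"
  proof (rule AE_pair_fst'[OF p2 p3])
    have "{x \<in> space (borel \<Otimes>\<^sub>M borel). wl \<le> fst x \<and> fst x \<le> (wh::real)} \<in> sets (borel \<Otimes>\<^sub>M (borel::real measure))"
      by measurable
    then show "{x \<in> space (M2 \<Otimes>\<^sub>M M3). wl \<le> fst x \<and> fst x \<le> wh} \<in> sets (M2 \<Otimes>\<^sub>M M3)"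
      using s23 sp23 by (simp add: space_pair_measure)
    show "AE x in M2. wl \<le> x \<and> x \<le> wh" using unif_AE[OF wl] by (simp only: M2_def)
  qed
  have ae2: "AE z in M1 \<Otimes>\<^sub>M (M2 \<Otimes>\<^sub>M M3). wl \<le> fst (snd z) \<and> fst (snd z) \<le> wh"
  proof (rule AE_pair_snd'[OF p1 p23, where Q="\<lambda>y. wl \<le> fst y \<and> fst y \<le> wh"])
    have "{x \<in> space (borel \<Otimes>\<^sub>M (borel \<Otimes>\<^sub>M borel)). wl \<le> fst (snd x) \<and> fst (snd x) \<le> (wh::real)} \<in> sets (borel \<Otimes>\<^sub>M (borel \<Otimes>\<^sub>M (borel::real measure)))"
      by measurable
    then show "{x \<in> space (M1 \<Otimes>\<^sub>M (M2 \<Otimes>\<^sub>M M3)). wl \<le> fst (snd x) \<and> fst (snd x) \<le> wh} \<in> sets (M1 \<Otimes>\<^sub>M (M2 \<Otimes>\<^sub>M M3))"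
      using s sp by (simp add: space_pair_measure)
    show "AE x in M2 \<Otimes>\<^sub>M M3. wl \<le> fst x \<and> fst x \<le> wh" by (rule ae23)
  qed
  have "mu_expect hl hh wl wh F \<le> (\<integral>\<^sup>+ q. ennreal \<epsilon> \<partial>(M1 \<Otimes>\<^sub>M (M2 \<Otimes>\<^sub>M M3)))"
    unfolding mu_expect_def M1_def[symmetric] M2_def[symmetric] M3_def[symmetric]
    by (rule nn_integral_mono_AE) (use ae1 ae2 in \<open>auto intro: F\<close>)
  also have "\<dots> = ennreal \<epsilon>" using prob_space.emeasure_space_1[OF p] by simp
  finally show ?thesis .
qed


lemma arc_int:
  fixes j L n m :: int
  assumes "0 \<le> j" "j < m" "0 \<le> L" "L < m" "0 \<le> n" "n \<le> m"
  shows "(\<exists>k. L \<le> j - m*k \<and> j - m*k < L + n) \<longleftrightarrow> ((L \<le> j \<and> j < L + n) \<or> j + m < L + n)"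
proof
  assume "\<exists>k. L \<le> j - m*k \<and> j - m*k < L + n"
  then obtain k where k: "L \<le> j - m*k" "j - m*k < L + n" by blast
  have "k \<le> 0"
  proof (rule ccontr)
    assume "\<not> k \<le> 0"
    then have "m \<le> m * k" using assms by simp
    then show False using k assms by linarith
  qed
  moreover have "k \<ge> -1"
  proof (rule ccontr)
    assume "\<not> k \<ge> -1"
    then have "k \<le> -2" by simp
    then have "m * k \<le> m * (-2)" using assms by (intro mult_left_mono) auto
    then show False using k assms by linarith
  qed
  ultimately have "k = 0 \<or> k = -1" by linarith
  then show "(L \<le> j \<and> j < L + n) \<or> j + m < L + n" using k by auto
next
  assume "(L \<le> j \<and> j < L + n) \<or> j + m < L + n"
  then show "\<exists>k. L \<le> j - m*k \<and> j - m*k < L + n"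
  proof
    assume "L \<le> j \<and> j < L + n" then show ?thesis by (intro exI[of _ 0]) simp
  next
    assume "j + m < L + n" then show ?thesis using assms by (intro exI[of _ "-1"]) simp
  qed
qed

lemma abs_mid: "\<bar>t - (a + w/2)\<bar> \<le> w/2 \<longleftrightarrow> a \<le> t \<and> t \<le> a + (w::real)"
  unfolding abs_le_iff by linarith

lemma sensor_geom:
  fixes a Tt h w \<xi> :: real and m :: nat
  assumes m: "0 < m"
  defines "\<Delta> \<equiv> 2*pi / real m"
  defines "\<alpha> \<equiv> \<xi> + a*Tt - w/2"
  defines "q0 \<equiv> \<lceil>\<alpha> / \<Delta>\<rceil>"
  defines "qe \<equiv> \<lfloor>(\<alpha> + w) / \<Delta>\<rfloor>"
  defines "nI \<equiv> qe - q0 + 1"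
  defines "L \<equiv> nat (q0 mod int m)"
  defines "k0 \<equiv> q0 div int m"
  defines "\<beta>0 \<equiv> \<alpha> - 2*pi*real_of_int k0"
  assumes n: "0 \<le> nI" "nI \<le> int m"
  shows "\<And>j. j < m \<Longrightarrow> bump h w \<xi> (- (a*Tt) + 2 * pi * real j / real m) = (if inarc m L (nat nI) j then h else 0)"
    and "\<beta>0 \<le> real L * \<Delta>" "real L * \<Delta> < \<beta>0 + \<Delta>"
    and "\<beta>0 + w < real L * \<Delta> + real (nat nI) * \<Delta>" "real L * \<Delta> + real (nat nI) * \<Delta> \<le> \<beta>0 + w + \<Delta>"
    and "L < m" "0 \<le> real L * \<Delta>" "real L * \<Delta> < 2*pi"
    and "\<And>y. (\<exists>k::int. \<bar>y - a*Tt - \<xi> - 2*pi*real_of_int k\<bar> \<le> w/2) \<longleftrightarrow>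
               (\<exists>k::int. \<beta>0 + 2*pi*real_of_int k \<le> y \<and> y \<le> \<beta>0 + w + 2*pi*real_of_int k)"
    and "w / \<Delta> - 1 \<le> real_of_int nI" "real_of_int nI \<le> w / \<Delta> + 1"
proof -
  have D: "0 < \<Delta>" using m by (simp add: \<Delta>_def)
  have mD: "real m * \<Delta> = 2*pi" using m by (simp add: \<Delta>_def)
  have qL: "q0 = int L + int m * k0" unfolding L_def k0_def using m by simp
  have Lm: "L < m"
  proof -
    have "q0 mod int m < int m" "0 \<le> q0 mod int m" using m by simp_all
    then show ?thesis unfolding L_def by (simp add: nat_less_iff)
  qed
  then show "L < m" .
  have q0D: "real_of_int q0 * \<Delta> = real L * \<Delta> + 2*pi*real_of_int k0"
    unfolding qL using mD by (simp add: algebra_simps)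
  have c1: "\<alpha> \<le> real_of_int q0 * \<Delta>"
  proof -
    have "\<alpha>/\<Delta> \<le> real_of_int q0" unfolding q0_def by (rule le_of_int_ceiling)
    then show ?thesis using D by (simp add: pos_divide_le_eq)
  qed
  have c2: "real_of_int q0 * \<Delta> < \<alpha> + \<Delta>"
  proof -
    have "real_of_int q0 < \<alpha>/\<Delta> + 1" using ceiling_correct[of "\<alpha>/\<Delta>"] unfolding q0_def by linarith
    then have "real_of_int q0 * \<Delta> < (\<alpha>/\<Delta> + 1) * \<Delta>" using D by simp
    then show ?thesis using D by (simp add: distrib_right)
  qed
  have f1: "real_of_int qe * \<Delta> \<le> \<alpha> + w"
  proof -
    have "real_of_int qe \<le> (\<alpha>+w)/\<Delta>" unfolding qe_def by (rule of_int_floor_le)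
    then show ?thesis using D by (simp add: pos_le_divide_eq)
  qed
  have f2: "\<alpha> + w < (real_of_int qe + 1) * \<Delta>"
  proof -
    have "(\<alpha>+w)/\<Delta> < real_of_int qe + 1" unfolding qe_def by (rule real_of_int_floor_add_one_gt)
    then show ?thesis using D by (simp add: divide_less_eq)
  qed
  show "\<beta>0 \<le> real L * \<Delta>" using c1 q0D by (simp add: \<beta>0_def)
  show "real L * \<Delta> < \<beta>0 + \<Delta>" using c2 q0D by (simp add: \<beta>0_def)
  have nn: "real (nat nI) = real_of_int nI" using n by simp
  have PR: "real L * \<Delta> + real (nat nI) * \<Delta> = (real_of_int qe + 1) * \<Delta> - 2*pi*real_of_int k0"
    using q0D nn by (simp add: nI_def algebra_simps)
  show "\<beta>0 + w < real L * \<Delta> + real (nat nI) * \<Delta>" using PR f2 by (simp add: \<beta>0_def)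
  show "real L * \<Delta> + real (nat nI) * \<Delta> \<le> \<beta>0 + w + \<Delta>" using PR f1 by (simp add: \<beta>0_def algebra_simps)
  show "0 \<le> real L * \<Delta>" using D by simp
  show "real L * \<Delta> < 2*pi"
  proof -
    have "real L * \<Delta> < real m * \<Delta>" using Lm D by simp
    then show ?thesis using mD by simp
  qed
  show "(\<exists>k::int. \<bar>y - a*Tt - \<xi> - 2*pi*real_of_int k\<bar> \<le> w/2) \<longleftrightarrow>
        (\<exists>k::int. \<beta>0 + 2*pi*real_of_int k \<le> y \<and> y \<le> \<beta>0 + w + 2*pi*real_of_int k)" for y
  proof
    assume "\<exists>k::int. \<bar>y - a*Tt - \<xi> - 2*pi*real_of_int k\<bar> \<le> w/2"
    then obtain k :: int where k: "\<bar>y - a*Tt - \<xi> - 2*pi*real_of_int k\<bar> \<le> w/2" by blast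
    have k1: "y - a*Tt - \<xi> - 2*pi*real_of_int k \<le> w/2" using abs_le_D1[OF k] .
    have k2: "- (y - a*Tt - \<xi> - 2*pi*real_of_int k) \<le> w/2" using abs_le_D2[OF k] .
    show "\<exists>k::int. \<beta>0 + 2*pi*real_of_int k \<le> y \<and> y \<le> \<beta>0 + w + 2*pi*real_of_int k"
      by (rule exI[of _ "k + k0"]) (use k1 k2 in \<open>simp add: \<beta>0_def \<alpha>_def distrib_left; linarith\<close>)
  next
    assume "\<exists>k::int. \<beta>0 + 2*pi*real_of_int k \<le> y \<and> y \<le> \<beta>0 + w + 2*pi*real_of_int k"
    then obtain k :: int where k: "\<beta>0 + 2*pi*real_of_int k \<le> y" "y \<le> \<beta>0 + w + 2*pi*real_of_int k" by blast
    show "\<exists>k::int. \<bar>y - a*Tt - \<xi> - 2*pi*real_of_int k\<bar> \<le> w/2"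
    proof (rule exI[of _ "k - k0"])
      have e: "y - a*Tt - \<xi> - 2*pi*real_of_int (k - k0) = y - (\<beta>0 + w/2 + 2*pi*real_of_int k)"
        by (simp add: \<beta>0_def \<alpha>_def algebra_simps)
      show "\<bar>y - a*Tt - \<xi> - 2*pi*real_of_int (k - k0)\<bar> \<le> w/2"
        unfolding e abs_le_iff using k by linarith
    qed
  qed
  show "w / \<Delta> - 1 \<le> real_of_int nI"
  proof -
    have "real_of_int q0 < \<alpha>/\<Delta> + 1" using c2 D by (simp add: field_simps)
    moreover have "(\<alpha>+w)/\<Delta> < real_of_int qe + 1" using f2 D by (simp add: field_simps)
    ultimately show ?thesis by (simp add: nI_def add_divide_distrib)
  qed
  show "real_of_int nI \<le> w / \<Delta> + 1"
  proof -
    have "\<alpha>/\<Delta> \<le> real_of_int q0" using c1 D by (simp add: field_simps)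
    moreover have "real_of_int qe \<le> (\<alpha>+w)/\<Delta>" using f1 D by (simp add: field_simps)
    ultimately show ?thesis by (simp add: nI_def add_divide_distrib)
  qed
  fix j assume j: "j < m"
  have key: "\<bar>- (a*Tt) + 2 * pi * real j / real m - \<xi> - 2*pi*real_of_int k\<bar> \<le> w/2 \<longleftrightarrow>
      q0 \<le> int j - int m * k \<and> int j - int m * k \<le> qe" for k :: int
  proof -
    have e: "- (a*Tt) + 2 * pi * real j / real m - \<xi> - 2*pi*real_of_int k = real_of_int (int j - int m * k) * \<Delta> - (\<alpha> + w/2)"
      using m by (simp add: \<Delta>_def \<alpha>_def field_simps)
    have "\<bar>real_of_int (int j - int m * k) * \<Delta> - (\<alpha> + w/2)\<bar> \<le> w/2 \<longleftrightarrow>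
         \<alpha> \<le> real_of_int (int j - int m * k) * \<Delta> \<and> real_of_int (int j - int m * k) * \<Delta> \<le> \<alpha> + w"
      by (rule abs_mid)
    also have "\<dots> \<longleftrightarrow> q0 \<le> int j - int m * k \<and> int j - int m * k \<le> qe"
      using D by (simp add: q0_def qe_def ceiling_le_iff le_floor_iff pos_divide_le_eq pos_le_divide_eq del: of_int_diff of_int_mult)
    finally show ?thesis using e by simp
  qed
  have "(\<exists>k::int. q0 \<le> int j - int m * k \<and> int j - int m * k \<le> qe) \<longleftrightarrow>
        (\<exists>k::int. int L \<le> int j - int m * k \<and> int j - int m * k < int L + nI)"
  proof
    assume "\<exists>k::int. q0 \<le> int j - int m * k \<and> int j - int m * k \<le> qe"
    then obtain k where "q0 \<le> int j - int m * k" "int j - int m * k \<le> qe" by blast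
    then show "\<exists>k::int. int L \<le> int j - int m * k \<and> int j - int m * k < int L + nI"
      by (intro exI[of _ "k + k0"]) (auto simp: qL nI_def algebra_simps)
  next
    assume "\<exists>k::int. int L \<le> int j - int m * k \<and> int j - int m * k < int L + nI"
    then obtain k where "int L \<le> int j - int m * k" "int j - int m * k < int L + nI" by blast
    then show "\<exists>k::int. q0 \<le> int j - int m * k \<and> int j - int m * k \<le> qe"
      by (intro exI[of _ "k - k0"]) (auto simp: qL nI_def algebra_simps)
  qed
  also have "\<dots> \<longleftrightarrow> ((int L \<le> int j \<and> int j < int L + nI) \<or> int j + int m < int L + nI)"
    by (rule arc_int) (use j Lm n in auto)
  also have "\<dots> \<longleftrightarrow> inarc m L (nat nI) j"
    unfolding inarc_def using n by auto
  finally show "bump h w \<xi> (- (a*Tt) + 2 * pi * real j / real m) = (if inarc m L (nat nI) j then h else 0)"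
    unfolding bump_def using key by simp
qed


lemma pipeline:
  fixes K d m L n :: nat and h hl hh D M \<Delta> \<delta> :: real and s :: "nat \<Rightarrow> real"
  assumes K: "3 \<le> K" and d: "1 \<le> d" and m: "m = K*d" and L: "L < m"
    and n1: "2*d \<le> n" and n2: "n + 2*d \<le> m"
    and hl: "0 < hl" "hl \<le> h" "h \<le> hh" and D: "D = hh * real d" and M: "hh * real K * real d \<le> M"
    and s: "\<And>j. s j = (if inarc m L n j then h else 0)"
  shows "nn_eval (netA K d hl D M) (map s [0..<m]) = map (\<lambda>i. h) [0..<8]"
    and "nn_eval (netG K d hl D M \<Delta> \<delta>) (map s [0..<m])
           = map (\<lambda>i. - \<Delta> * (h * real L) + gH d \<delta> i * (h * real d) + gN \<Delta> i * (h * real n)) [0..<8]"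
proof -
  define P where "P = inarc m L n"
  define cnt where "cnt = cntb d P"
  define i0 where "i0 = L div d"
  define C where "C = (\<lambda>i. \<Sum>j\<in>{i*d..<i*d+d}. s j)"
  define R where "R = (\<lambda>i. max 0 (C i / hl - 1))"
  define E where "E = (\<lambda>i. max 0 ((C i - C (pv K i)) / hl + (R (pv K i) - R i)))"
  define Q where "Q = (\<lambda>i. max 0 (C i - D * E (pv K i)))"
  define SC where "SC = (\<Sum>j<K. C j)"
  define SQ where "SQ = (\<Sum>j<K. Q j)"
  define Aa where "Aa = (\<lambda>i. max 0 (real (i+1) * (SC - SQ) - C i))"
  define Bb where "Bb = (\<lambda>i. max 0 (real (i+1) * (SC - SQ) - C i - M * E i))"
  define Hr where "Hr = (max 0 (SC - SQ))"
  define Nr where "Nr = (max 0 SC)"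
  define V4 where "V4 = (cat K Aa (cat K Bb (\<lambda>t. if t = 0 then Hr else Nr)))"
  have h0: "0 < h" using hl by simp
  have s0: "0 \<le> s j" for j using h0 by (simp add: s)
  have K0: "0 < K" using K by simp
  have ev: "nn_eval (core K d hl D M @ [L5]) (map s [0..<K*d]) = affine L5 (map V4 [0..<K+(K+2)])" for L5
    by (rule core_eval[OF K0 s0 C_def R_def E_def Q_def SC_def SQ_def Aa_def Bb_def Hr_def Nr_def V4_def])
  have Cc: "C i = h * real (cnt i)" if "i < K" for i
  proof -
    have "C i = (\<Sum>j\<in>{i*d..<i*d+d}. if P j then h else 0)" by (simp add: C_def s P_def)
    also have "\<dots> = h * real (card {j\<in>{i*d..<i*d+d}. P j})"
      by (simp add: sum.If_cases Int_def mult.commute)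
    finally show ?thesis by (simp add: cnt_def cntb_def)
  qed
  note ac = arc_comb[OF K d m L n1 n2, folded P_def, folded cnt_def i0_def]
  have K2: "2 \<le> K" using K by simp
  have cd: "\<And>i. i < K \<Longrightarrow> cnt i \<le> d" using cntb_le by (simp add: cnt_def)
  note sem = core_sem[OF K2 hl Cc cd ac(1) ac(3) ac(4) ac(5) ac(6) D M
      R_def E_def Q_def SC_def SQ_def Aa_def Bb_def Hr_def Nr_def]
  have Hr: "Hr = h * real d" by (rule sem(1)) auto
  have Nr0: "Nr = h * real (\<Sum>j<K. cnt j)" by (rule sem(2)) auto
  have Nr: "Nr = h * real n" using Nr0 ac(7) by simp
  have AB: "(\<Sum>j<K. Aa j) - (\<Sum>j<K. Bb j) = h * real L"
  proof -
    have lm: "L mod d < d" using d by simp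
    have e: "L div d * d + L mod d = L" by (rule div_mult_mod_eq)
    have "L < (i0+1)*d" unfolding i0_def using e lm by (simp only: add_mult_distrib mult_1_left)
    then have "real ((i0+1)*d) - real (cnt i0) = real L" using ac(2) by simp
    moreover have "(\<Sum>j<K. Aa j) - (\<Sum>j<K. Bb j) = h * (real ((i0+1)*d) - real (cnt i0))"
      by (rule sem(3)) auto
    ultimately show ?thesis by simp
  qed
  show "nn_eval (netA K d hl D M) (map s [0..<m]) = map (\<lambda>i. h) [0..<8]"
    unfolding netA_def m ev V4_def final_A Hr using d by simp
  show "nn_eval (netG K d hl D M \<Delta> \<delta>) (map s [0..<m])
           = map (\<lambda>i. - \<Delta> * (h * real L) + gH d \<delta> i * (h * real d) + gN \<Delta> i * (h * real n)) [0..<8]"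
  proof -
    have "- \<Delta> * (\<Sum>j<K. Aa j) + \<Delta> * (\<Sum>j<K. Bb j) = - \<Delta> * (h * real L)"
      using AB by (simp add: algebra_simps)
    then show ?thesis
      unfolding netG_def m ev V4_def final_G Hr Nr by simp
  qed
qed


lemma wf_single: "nn_wf n k [mk_layer n k W b]"
proof -
  have "length [n,k] = Suc (length [mk_layer n k W b]) \<and> [n,k] ! 0 = n \<and> [n,k] ! length [mk_layer n k W b] = k \<and>
        (\<forall>i<length [mk_layer n k W b]. length (fst ([mk_layer n k W b] ! i)) = [n,k] ! Suc i \<and>
           length (snd ([mk_layer n k W b] ! i)) = [n,k] ! Suc i \<and>
           (\<forall>r\<in>set (fst ([mk_layer n k W b] ! i)). length r = [n,k] ! i))"
    by (auto simp: mk_layer_def)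
  then show ?thesis unfolding nn_wf_def by blast
qed

lemma wf_cons:
  assumes "nn_wf k out Ls"
  shows "nn_wf n out (mk_layer n k W b # Ls)"
proof -
  from assms obtain ds where ds: "length ds = Suc (length Ls)" "ds ! 0 = k" "ds ! length Ls = out"
    "\<forall>i<length Ls. length (fst (Ls ! i)) = ds ! Suc i \<and> length (snd (Ls ! i)) = ds ! Suc i \<and>
        (\<forall>r\<in>set (fst (Ls ! i)). length r = ds ! i)"
    unfolding nn_wf_def by blast
  let ?L = "mk_layer n k W b # Ls"
  have "length (n # ds) = Suc (length ?L) \<and> (n # ds) ! 0 = n \<and> (n # ds) ! length ?L = out \<and>
     (\<forall>i<length ?L. length (fst (?L ! i)) = (n # ds) ! Suc i \<and> length (snd (?L ! i)) = (n # ds) ! Suc i \<and>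
        (\<forall>r\<in>set (fst (?L ! i)). length r = (n # ds) ! i))"
  proof (intro conjI allI impI)
    show "length (n # ds) = Suc (length ?L)" using ds by simp
    show "(n # ds) ! 0 = n" by simp
    show "(n # ds) ! length ?L = out" using ds by simp
    fix i assume i: "i < length ?L"
    show "length (fst (?L ! i)) = (n # ds) ! Suc i" using ds i by (cases i) (auto simp: mk_layer_def)
    show "length (snd (?L ! i)) = (n # ds) ! Suc i" using ds i by (cases i) (auto simp: mk_layer_def)
    show "\<forall>r\<in>set (fst (?L ! i)). length r = (n # ds) ! i" using ds i by (cases i) (auto simp: mk_layer_def)
  qed
  then show ?thesis unfolding nn_wf_def by blast
qed

definition bet :: "real \<Rightarrow> nat \<Rightarrow> real" where
  "bet \<delta> k = (if k mod 4 = 0 \<or> k mod 4 = 3 then 1 / \<delta> else - 1 / \<delta>)"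

definition Bn :: "nat \<Rightarrow> real \<Rightarrow> layer list" where
  "Bn m \<delta> = [mk_layer m 8 (\<lambda>i j. 0) (bet \<delta>)]"

definition Trn :: "layer list" where
  "Trn = [mk_layer 1 1 (\<lambda>i j. 1) (\<lambda>i. 0), mk_layer 1 8 (\<lambda>i j. 1) (\<lambda>i. 0)]"

lemma Bn_eval: "nn_eval (Bn m \<delta>) (map s [0..<m]) = map (bet \<delta>) [0..<8]"
  unfolding Bn_def by (simp add: affine_mk)

lemma Trn_eval: "nn_eval Trn [z] = map (\<lambda>i. max 0 z) [0..<8]"
proof -
  have z: "[z] = map (\<lambda>j. z) [0..<1]" by simp
  show ?thesis
    apply (simp only: Trn_def nn_eval.simps)
    apply (subst z)
    apply (simp only: affine_mk relu_map)
    apply simp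
    done
qed

lemma wf_core: "nn_wf (K*d) out (core K d hl D M @ [mk_layer (K+(K+2)) out W b])"
  unfolding core_def by (simp add: wf_cons wf_single)

lemma width_core: "nn_width (core K d hl D M @ [L5]) \<le> 3*K + 2"
  unfolding core_def nn_width_def by (simp add: mk_layer_def)

lemma depth_core: "nn_depth (core K d hl D M @ [L5]) = 4"
  unfolding core_def nn_depth_def by simp

definition cH :: "real \<Rightarrow> nat \<Rightarrow> real" where
  "cH \<delta> k = (if odd k then - \<delta> else 0) + (if 4 \<le> k then 2*pi else 0)"
definition cN :: "real \<Rightarrow> nat \<Rightarrow> nat \<Rightarrow> real" where
  "cN \<Delta> n k = (if 2 \<le> k mod 4 then - (real n * \<Delta>) else 0)"

lemma gam_eq:
  assumes "0 < d"
  shows "h * y + (- \<Delta> * (h * real L) + gH d \<delta> k * (h * real d) + gN \<Delta> k * (h * real n))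
     = h * (y - real L * \<Delta> + cH \<delta> k + cN \<Delta> n k)"
  using assms by (simp add: gH_def gN_def cH_def cN_def algebra_simps)

lemma max_h: "0 < h \<Longrightarrow> max 0 (h * x) = h * max 0 (x::real)"
  by (auto simp: max_def mult_le_0_iff zero_le_mult_iff)

lemma out_formula:
  assumes h: "0 < h" and d: "0 < d" and de: "0 < \<delta>"
  shows "(\<Sum>k<8. bet \<delta> k * max 0 (h * y + (- \<Delta> * (h * real L) + gH d \<delta> k * (h * real d) + gN \<Delta> k * (h * real n))))
    = h * (GG \<delta> (real L * \<Delta>) (real L * \<Delta> + real n * \<Delta>) y + GG \<delta> (real L * \<Delta>) (real L * \<Delta> + real n * \<Delta>) (y + 2*pi))"
proof -
  have "(\<Sum>k<8. bet \<delta> k * max 0 (h * y + (- \<Delta> * (h * real L) + gH d \<delta> k * (h * real d) + gN \<Delta> k * (h * real n))))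
     = (\<Sum>k<8. bet \<delta> k * (h * max 0 (y - real L * \<Delta> + cH \<delta> k + cN \<Delta> n k)))"
    using gam_eq[OF d] max_h[OF h] by simp
  also have "\<dots> = h * (\<Sum>k<8. bet \<delta> k * max 0 (y - real L * \<Delta> + cH \<delta> k + cN \<Delta> n k))"
    by (simp add: sum_distrib_left algebra_simps)
  also have "(\<Sum>k<8. bet \<delta> k * max 0 (y - real L * \<Delta> + cH \<delta> k + cN \<Delta> n k)) =
     GG \<delta> (real L * \<Delta>) (real L * \<Delta> + real n * \<Delta>) y + GG \<delta> (real L * \<Delta>) (real L * \<Delta> + real n * \<Delta>) (y + 2*pi)"
  proof -
    define P where "P = real L * \<Delta>"
    define N where "N = real n * \<Delta>"
    define t where "t k = y - P + cH \<delta> k + cN \<Delta> n k" for k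
    have e8: "(\<Sum>k<(8::nat). f k) = f 0 + f 1 + f 2 + f 3 + f 4 + f 5 + f 6 + (f 7::real)" for f
      by (simp add: eval_nat_numeral)
    have t0: "t 0 = y - P" by (simp add: t_def cH_def cN_def)
    have t1: "t 1 = y - P - \<delta>" by (simp add: t_def cH_def cN_def)
    have t2: "t 2 = y - (P + N)" by (simp add: t_def cH_def cN_def N_def)
    have t3: "t 3 = y - (P + N) - \<delta>" by (simp add: t_def cH_def cN_def N_def)
    have t4: "t 4 = y + 2*pi - P" by (simp add: t_def cH_def cN_def)
    have t5: "t 5 = y + 2*pi - P - \<delta>" by (simp add: t_def cH_def cN_def)
    have t6: "t 6 = y + 2*pi - (P + N)" by (simp add: t_def cH_def cN_def N_def)
    have t7: "t 7 = y + 2*pi - (P + N) - \<delta>" by (simp add: t_def cH_def cN_def N_def)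
    have b: "bet \<delta> 0 = 1/\<delta>" "bet \<delta> 1 = -1/\<delta>" "bet \<delta> 2 = -1/\<delta>" "bet \<delta> 3 = 1/\<delta>"
       "bet \<delta> 4 = 1/\<delta>" "bet \<delta> 5 = -1/\<delta>" "bet \<delta> 6 = -1/\<delta>" "bet \<delta> 7 = 1/\<delta>"
      by (simp_all add: bet_def)
    have "(\<Sum>k<8. bet \<delta> k * max 0 (y - real L * \<Delta> + cH \<delta> k + cN \<Delta> n k)) = (\<Sum>k<8. bet \<delta> k * max 0 (t k))"
      by (simp add: t_def P_def)
    also have "\<dots> = (1/\<delta>) * (max 0 (y - P) - max 0 (y - P - \<delta>) - max 0 (y - (P + N)) + max 0 (y - (P + N) - \<delta>)
         + max 0 (y + 2*pi - P) - max 0 (y + 2*pi - P - \<delta>) - max 0 (y + 2*pi - (P + N)) + max 0 (y + 2*pi - (P + N) - \<delta>))"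
      unfolding e8 t0 t1 t2 t3 t4 t5 t6 t7 b by (simp add: algebra_simps)
    also have "\<dots> = GG \<delta> P (P + N) y + GG \<delta> P (P + N) (y + 2*pi)"
      unfolding GG_def rr_def by (simp add: diff_divide_distrib add_divide_distrib)
    finally show ?thesis by (simp add: P_def N_def)
  qed
  finally show ?thesis .
qed


lemma nI_bounds:
  fixes \<alpha> w \<Delta> :: real
  assumes D: "0 < \<Delta>"
  shows "w / \<Delta> - 1 \<le> real_of_int (\<lfloor>(\<alpha> + w) / \<Delta>\<rfloor> - \<lceil>\<alpha> / \<Delta>\<rceil> + 1)"
    and "real_of_int (\<lfloor>(\<alpha> + w) / \<Delta>\<rfloor> - \<lceil>\<alpha> / \<Delta>\<rceil> + 1) \<le> w / \<Delta> + 1"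
proof -
  have a1: "real_of_int \<lceil>\<alpha> / \<Delta>\<rceil> < \<alpha>/\<Delta> + 1" using ceiling_correct[of "\<alpha>/\<Delta>"] by linarith
  have a2: "\<alpha>/\<Delta> \<le> real_of_int \<lceil>\<alpha> / \<Delta>\<rceil>" by simp
  have b1: "(\<alpha>+w)/\<Delta> < real_of_int \<lfloor>(\<alpha> + w) / \<Delta>\<rfloor> + 1" by (rule real_of_int_floor_add_one_gt)
  have b2: "real_of_int \<lfloor>(\<alpha> + w) / \<Delta>\<rfloor> \<le> (\<alpha>+w)/\<Delta>" by simp
  have e: "(\<alpha>+w)/\<Delta> = \<alpha>/\<Delta> + w/\<Delta>" by (simp add: add_divide_distrib)
  show "w / \<Delta> - 1 \<le> real_of_int (\<lfloor>(\<alpha> + w) / \<Delta>\<rfloor> - \<lceil>\<alpha> / \<Delta>\<rceil> + 1)"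
    unfolding of_int_add of_int_diff of_int_1 using a1 b1 e by linarith
  show "real_of_int (\<lfloor>(\<alpha> + w) / \<Delta>\<rfloor> - \<lceil>\<alpha> / \<Delta>\<rceil> + 1) \<le> w / \<Delta> + 1"
    unfolding of_int_add of_int_diff of_int_1 using a2 b2 e by linarith
qed

lemma pointwise:
  fixes a Tt hl hh wl wh h w \<xi> \<epsilon> :: real and K d m :: nat
  assumes hl: "0 < hl" "hl \<le> h" "h \<le> hh" and wl: "0 < wl" "wl \<le> w" "w \<le> wh" "wh < 2*pi"
    and K: "3 \<le> K" "6*pi \<le> real K * wl" "6*pi \<le> real K * (2*pi - wh)" and d: "1 \<le> d"
    and m: "m = K*d" and me: "40*pi*hh \<le> \<epsilon> * real m"
  defines "\<Delta> \<equiv> 2*pi / real m"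
  defines "xs \<equiv> map (\<lambda>j. - (a*Tt) + 2 * pi * real j / real m) [0..<m]"
  shows "L1T_dist (G_adv a Tt (bump h w \<xi>))
     (sdon_eval xs 8 (Bn m \<Delta>) Trn (netA K d hl (hh * real d) (hh * real K * real d))
        (netG K d hl (hh * real d) (hh * real K * real d) \<Delta> \<Delta>) (bump h w \<xi>)) \<le> ennreal \<epsilon>"
proof -
  define \<alpha> where "\<alpha> = \<xi> + a*Tt - w/2"
  define q0 where "q0 = \<lceil>\<alpha> / \<Delta>\<rceil>"
  define qe where "qe = \<lfloor>(\<alpha> + w) / \<Delta>\<rfloor>"
  define nI where "nI = qe - q0 + 1"
  define L where "L = nat (q0 mod int m)"
  define k0 where "k0 = q0 div int m"
  define \<beta>0 where "\<beta>0 = \<alpha> - 2*pi*real_of_int k0"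
  define n where "n = nat nI"
  have m0: "0 < m" using K d m by simp
  have D: "0 < \<Delta>" using m0 by (simp add: \<Delta>_def)
  have h0: "0 < h" using hl by simp
  have wD: "w / \<Delta> = w * real m / (2*pi)" by (simp add: \<Delta>_def)
  have nb1: "w / \<Delta> - 1 \<le> real_of_int nI" using nI_bounds(1)[OF D, of w \<alpha>] by (simp add: nI_def qe_def q0_def)
  have nb2: "real_of_int nI \<le> w / \<Delta> + 1" using nI_bounds(2)[OF D, of \<alpha> w] by (simp add: nI_def qe_def q0_def)
  have md: "real m = real K * real d" using m by simp
  have low: "3 * real d \<le> w / \<Delta>"
  proof -
    have "6*pi * real d \<le> real K * wl * real d" using K(2) by (simp add: mult_right_mono)
    also have "\<dots> \<le> real K * w * real d" using wl by (simp add: mult_right_mono mult_left_mono)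
    finally have f: "6*pi * real d \<le> w * real m" using md by (simp add: algebra_simps)
    have "3 * real d * (2*pi) = 6*pi*real d" by simp
    then have "3 * real d \<le> w * real m / (2*pi)" using f by (subst pos_le_divide_eq) (auto simp: algebra_simps)
    then show ?thesis using wD by simp
  qed
  have up: "w / \<Delta> \<le> real m - 3 * real d"
  proof -
    have "6*pi * real d \<le> real K * (2*pi - wh) * real d" using K(3) by (simp add: mult_right_mono)
    also have "\<dots> \<le> real K * (2*pi - w) * real d" using wl by (simp add: mult_right_mono mult_left_mono)
    finally have f: "w * real m \<le> 2*pi*(real m - 3 * real d)" using md by (simp add: algebra_simps)
    have "w * real m / (2*pi) \<le> real m - 3 * real d" using f by (subst pos_divide_le_eq) (auto simp: mult.commute)
    then show ?thesis using wD by simp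
  qed
  have nI0: "0 \<le> nI" using nb1 low d by linarith
  have n1: "2*d \<le> n"
  proof -
    have "2 * real d \<le> real_of_int nI" using nb1 low d by linarith
    then show ?thesis unfolding n_def by linarith
  qed
  have n2: "n + 2*d \<le> m"
  proof -
    have "real_of_int nI + 2 * real d \<le> real m" using nb2 up d by linarith
    then show ?thesis unfolding n_def using nI0 by linarith
  qed
  have nIm: "nI \<le> int m" using n2 nI0 unfolding n_def by linarith
  note sg = sensor_geom[where a=a and Tt=Tt and w=w and \<xi>=\<xi> and m=m, OF m0, folded \<Delta>_def \<alpha>_def, folded q0_def qe_def, folded nI_def L_def k0_def,
       folded \<beta>0_def, OF nI0 nIm, folded n_def]
  define s where "s j = (if inarc m L n j then h else 0)" for j
  have e: "map (bump h w \<xi>) xs = map s [0..<m]"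
    unfolding xs_def map_map
  proof (rule map_cong[OF refl])
    fix j assume "j \<in> set [0..<m]"
    then have "j < m" by simp
    then show "(bump h w \<xi> \<circ> (\<lambda>j. - (a*Tt) + 2 * pi * real j / real m)) j = s j"
      unfolding o_def s_def by (rule sg(1))
  qed
  have Lm: "L < m" by (rule sg(6))
  note pl = pipeline[OF K(1) d m Lm n1 n2 hl refl order_refl, of s, OF s_def]
  have sd: "sdon_eval xs 8 (Bn m \<Delta>) Trn (netA K d hl (hh * real d) (hh * real K * real d))
        (netG K d hl (hh * real d) (hh * real K * real d) \<Delta> \<Delta>) (bump h w \<xi>)
      = (\<lambda>y. h * (GG \<Delta> (real L * \<Delta>) (real L * \<Delta> + real n * \<Delta>) y + GG \<Delta> (real L * \<Delta>) (real L * \<Delta> + real n * \<Delta>) (y + 2*pi)))"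
  proof
    fix y
    have "sdon_eval xs 8 (Bn m \<Delta>) Trn (netA K d hl (hh * real d) (hh * real K * real d))
        (netG K d hl (hh * real d) (hh * real K * real d) \<Delta> \<Delta>) (bump h w \<xi>) y
      = (\<Sum>k<8. bet \<Delta> k * max 0 (h * y + (- \<Delta> * (h * real L) + gH d \<Delta> k * (h * real d) + gN \<Delta> k * (h * real n))))"
      unfolding sdon_eval_def Let_def e pl(1) pl(2) Bn_eval Trn_eval by simp
    also have "\<dots> = h * (GG \<Delta> (real L * \<Delta>) (real L * \<Delta> + real n * \<Delta>) y + GG \<Delta> (real L * \<Delta>) (real L * \<Delta> + real n * \<Delta>) (y + 2*pi))"
      by (rule out_formula) (use h0 d D in auto)
    finally show "sdon_eval xs 8 (Bn m \<Delta>) Trn (netA K d hl (hh * real d) (hh * real K * real d))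
        (netG K d hl (hh * real d) (hh * real K * real d) \<Delta> \<Delta>) (bump h w \<xi>) y
      = h * (GG \<Delta> (real L * \<Delta>) (real L * \<Delta> + real n * \<Delta>) y + GG \<Delta> (real L * \<Delta>) (real L * \<Delta> + real n * \<Delta>) (y + 2*pi))" .
  qed
  have ga: "G_adv a Tt (bump h w \<xi>) = (\<lambda>y. if \<exists>k::int. \<beta>0 + 2*pi*k \<le> y \<and> y \<le> \<beta>0 + w + 2*pi*k then h else 0)"
  proof
    fix y
    show "G_adv a Tt (bump h w \<xi>) y = (if \<exists>k::int. \<beta>0 + 2*pi*k \<le> y \<and> y \<le> \<beta>0 + w + 2*pi*k then h else 0)"
      unfolding G_adv_def bump_def using sg(9)[of y] by (simp add: algebra_simps)
  qed
  have wD2: "\<Delta> \<le> w"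
  proof -
    have "3 \<le> 3 * real d" using d by simp
    then have "1 \<le> w / \<Delta>" using low by linarith
    then show ?thesis using D by (simp add: le_divide_eq)
  qed
  have err: "L1T_dist (G_adv a Tt (bump h w \<xi>))
     (sdon_eval xs 8 (Bn m \<Delta>) Trn (netA K d hl (hh * real d) (hh * real K * real d))
        (netG K d hl (hh * real d) (hh * real K * real d) \<Delta> \<Delta>) (bump h w \<xi>)) \<le> ennreal (10 * h * (\<Delta> + \<Delta>))"
    unfolding L1T_dist_def sd ga
  proof (rule L1_err[OF h0 _ _ D D wD2 sg(2) sg(3) sg(7) sg(8) sg(4) sg(5)])
    show "0 < w" using wl by simp
    show "w < 2*pi" using wl by simp
  qed
  have "10 * h * (\<Delta> + \<Delta>) \<le> \<epsilon>"
  proof -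
    have "10 * h * (\<Delta> + \<Delta>) = 40 * pi * h / real m" by (simp add: \<Delta>_def)
    also have "\<dots> \<le> 40 * pi * hh / real m" using hl m0 by (simp add: divide_right_mono)
    also have "\<dots> \<le> \<epsilon>" using me m0 by (simp add: divide_le_eq)
    finally show ?thesis .
  qed
  then show ?thesis using err by (meson ennreal_leI order.trans)
qed


lemma width_B: "nn_width (Bn m \<delta>) = 0" by (simp add: Bn_def nn_width_def)
lemma width_T: "nn_width Trn = 1" by (simp add: Trn_def nn_width_def mk_layer_def)
lemma depth_B: "nn_depth (Bn m \<delta>) = 0" by (simp add: Bn_def nn_depth_def)
lemma depth_T: "nn_depth Trn = 1" by (simp add: Trn_def nn_depth_def)

theorem theorem3p2:
  fixes a T hl hh wl wh :: real
  assumes "T > 0" and "0 < hl" and "hl \<le> hh" and "0 < wl" and "wl \<le> wh" and "wh < 2 * pi"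
  shows "\<exists>C>0. \<forall>\<epsilon>::real. 0 < \<epsilon> \<and> \<epsilon> \<le> 1/2 \<longrightarrow>
           (\<exists>m p (x0::real) B Tr A G.
              sdon_wf m p B Tr A G \<and>
              real p \<le> C \<and> real m \<le> C / \<epsilon> \<and>
              mu_expect hl hh wl wh
                (\<lambda>u. L1T_dist (G_adv a T u)
                       (sdon_eval (map (\<lambda>j. x0 + 2 * pi * real j / real m) [0..<m]) p B Tr A G u))
                \<le> ennreal \<epsilon> \<and>
              real (sdon_width B Tr A G) \<le> C \<and>
              real (sdon_depth B Tr A G) \<le> C * (ln (1 / \<epsilon>))^2 \<and>
              real (sdon_size m p B Tr A G) \<le> C / \<epsilon>)"
proof -
  define K where "K = nat \<lceil>6*pi/wl\<rceil> + nat \<lceil>6*pi/(2*pi - wh)\<rceil> + 3"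
  define c where "c = 40*pi*hh"
  define W where "W = 6*K + 5"
  define C where "C = real K * (c + 1) * real W + 8 * real W + 4 * real W ^ 2 + 16"
  have hh0: "0 < hh" using assms by simp
  have c0: "0 < c" using hh0 by (simp add: c_def)
  have K3: "3 \<le> K" by (simp add: K_def)
  have Kwl: "6*pi \<le> real K * wl"
  proof -
    have "6*pi/wl \<le> real K" unfolding K_def by linarith
    then show ?thesis using assms(4) by (simp add: divide_le_eq mult.commute)
  qed
  have Kwh: "6*pi \<le> real K * (2*pi - wh)"
  proof -
    have "6*pi/(2*pi - wh) \<le> real K" unfolding K_def by linarith
    then show ?thesis using assms(6) by (simp add: divide_le_eq mult.commute)
  qed
  have W1: "1 \<le> real W" by (simp add: W_def)
  have C16: "16 \<le> C"
  proof -
    have "0 \<le> real K * (c + 1) * real W" using c0 by simp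
    then show ?thesis unfolding C_def by simp
  qed
  show ?thesis
  proof (rule exI[of _ C], intro conjI allI impI)
    show "0 < C" using C16 by simp
    fix \<epsilon> :: real assume e: "0 < \<epsilon> \<and> \<epsilon> \<le> 1/2"
    then have e0: "0 < \<epsilon>" and e1: "\<epsilon> \<le> 1/2" by auto
    define d where "d = nat \<lceil>c/\<epsilon>\<rceil>"
    define m where "m = K * d"
    define \<Delta> where "\<Delta> = 2*pi / real m"
    have cpos: "0 < c/\<epsilon>" using c0 e0 by simp
    then have "1 \<le> \<lceil>c/\<epsilon>\<rceil>" by (simp add: le_ceiling_iff)
    then have d1: "1 \<le> d" unfolding d_def by linarith
    have r: "real d = real_of_int \<lceil>c/\<epsilon>\<rceil>" unfolding d_def using \<open>1 \<le> \<lceil>c/\<epsilon>\<rceil>\<close> by simp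
    have dle: "real d \<le> c/\<epsilon> + 1" using r ceiling_correct[of "c/\<epsilon>"] by linarith
    have dge: "c/\<epsilon> \<le> real d" using r by simp
    have md: "real m = real K * real d" by (simp add: m_def)
    have me: "40*pi*hh \<le> \<epsilon> * real m"
    proof -
      have "c \<le> \<epsilon> * real d" using dge e0 by (simp add: divide_le_eq mult.commute)
      also have "\<dots> \<le> \<epsilon> * real m"
      proof -
        have "real d \<le> real K * real d" using K3 mult_right_mono[of 1 "real K" "real d"] by simp
        then show ?thesis using e0 md by (simp add: mult_le_cancel_left_pos)
      qed
      finally show ?thesis by (simp add: c_def)
    qed
    have inv1: "1 \<le> 1/\<epsilon>" using e0 e1 by simp
    have mC: "real m \<le> real K * (c + 1) / \<epsilon>"
    proof -
      have "real m \<le> real K * (c/\<epsilon> + 1)" using md dle by (simp add: mult_left_mono)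
      also have "\<dots> \<le> real K * (c/\<epsilon> + 1/\<epsilon>)" using inv1 by (simp add: mult_left_mono)
      also have "\<dots> = real K * (c + 1) / \<epsilon>" by (metis add_divide_distrib times_divide_eq_right)
      finally show ?thesis .
    qed
    let ?A = "netA K d hl (hh * real d) (hh * real K * real d)"
    let ?G = "netG K d hl (hh * real d) (hh * real K * real d) \<Delta> \<Delta>"
    show "\<exists>m p (x0::real) B Tr A G.
              sdon_wf m p B Tr A G \<and>
              real p \<le> C \<and> real m \<le> C / \<epsilon> \<and>
              mu_expect hl hh wl wh
                (\<lambda>u. L1T_dist (G_adv a T u)
                       (sdon_eval (map (\<lambda>j. x0 + 2 * pi * real j / real m) [0..<m]) p B Tr A G u))
                \<le> ennreal \<epsilon> \<and>
              real (sdon_width B Tr A G) \<le> C \<and>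
              real (sdon_depth B Tr A G) \<le> C * (ln (1 / \<epsilon>))^2 \<and>
              real (sdon_size m p B Tr A G) \<le> C / \<epsilon>"
    proof (intro exI conjI)
      show "sdon_wf m 8 (Bn m \<Delta>) Trn ?A ?G"
        unfolding sdon_wf_def netA_def netG_def m_def
        unfolding Bn_def Trn_def
        by (intro conjI wf_single wf_cons wf_core)
      show "real 8 \<le> C" using C16 by simp
      show "real m \<le> C / \<epsilon>"
      proof -
        have "real K * (c + 1) \<le> C"
        proof -
          have "0 \<le> real K * (c + 1)" using c0 by simp
          then have "real K * (c + 1) \<le> real K * (c + 1) * real W" using W1 mult_left_mono[of 1 "real W" "real K * (c + 1)"] by simp
          moreover have "0 \<le> 8 * real W + 4 * real W ^ 2" by simp
          ultimately show ?thesis unfolding C_def by linarith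
        qed
        then have "real K * (c + 1) / \<epsilon> \<le> C / \<epsilon>" using e0 by (simp add: divide_right_mono)
        then show ?thesis using mC by linarith
      qed
      show "mu_expect hl hh wl wh
                (\<lambda>u. L1T_dist (G_adv a T u)
                       (sdon_eval (map (\<lambda>j. - (a*T) + 2 * pi * real j / real m) [0..<m]) 8 (Bn m \<Delta>) Trn ?A ?G u))
                \<le> ennreal \<epsilon>"
      proof (rule mu_bound)
        show "hl \<le> hh" "wl \<le> wh" "0 \<le> \<epsilon>" using assms e0 by auto
        fix h w \<xi> assume hw: "hl \<le> h" "h \<le> hh" "wl \<le> w" "w \<le> wh"
        show "L1T_dist (G_adv a T (bump h w \<xi>))
                       (sdon_eval (map (\<lambda>j. - (a*T) + 2 * pi * real j / real m) [0..<m]) 8 (Bn m \<Delta>) Trn ?A ?G (bump h w \<xi>))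
                \<le> ennreal \<epsilon>"
          unfolding \<Delta>_def
          by (rule pointwise[OF assms(2) hw(1,2) assms(4) hw(3,4) assms(6) K3 Kwl Kwh d1 m_def me])
      qed
      have w1: "nn_width ?A \<le> 3*K + 2" unfolding netA_def by (rule width_core)
      have w2: "nn_width ?G \<le> 3*K + 2" unfolding netG_def by (rule width_core)
      have wid: "sdon_width (Bn m \<Delta>) Trn ?A ?G \<le> W"
        using w1 w2 unfolding sdon_width_def W_def by (simp add: width_B width_T)
      then have widr: "real (sdon_width (Bn m \<Delta>) Trn ?A ?G) \<le> real W" by simp
      show "real (sdon_width (Bn m \<Delta>) Trn ?A ?G) \<le> C"
      proof -
        have "real W \<le> 8 * real W" by simp
        moreover have "0 \<le> real K * (c + 1) * real W" using c0 by simp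
        moreover have "0 \<le> 4 * real W ^ 2" by simp
        ultimately show ?thesis using widr unfolding C_def by linarith
      qed
      have dep: "sdon_depth (Bn m \<Delta>) Trn ?A ?G = 4"
        unfolding sdon_depth_def netA_def netG_def by (simp add: depth_B depth_T depth_core)
      show "real (sdon_depth (Bn m \<Delta>) Trn ?A ?G) \<le> C * (ln (1 / \<epsilon>))^2"
      proof -
        have "ln \<epsilon> \<le> \<epsilon> - 1" using e0 by (rule ln_le_minus_one)
        then have "1/2 \<le> ln (1/\<epsilon>)" using e1 e0 by (simp add: ln_div)
        then have "(1/2)^2 \<le> (ln (1/\<epsilon>))^2" by (intro power_mono) auto
        then have "1/4 \<le> (ln (1/\<epsilon>))^2" by (simp add: power2_eq_square)
        then have "16 * (1/4) \<le> C * (ln (1/\<epsilon>))^2" using C16 by (intro mult_mono) auto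
        then show ?thesis using dep by simp
      qed
      show "real (sdon_size m 8 (Bn m \<Delta>) Trn ?A ?G) \<le> C / \<epsilon>"
      proof -
        let ?w = "real (sdon_width (Bn m \<Delta>) Trn ?A ?G)"
        have "real (sdon_size m 8 (Bn m \<Delta>) Trn ?A ?G) = (real m + 8) * ?w + ?w^2 * 4"
          unfolding sdon_size_def dep by simp
        also have "\<dots> \<le> (real m + 8) * real W + real W^2 * 4"
          using widr by (intro add_mono mult_mono power_mono) auto
        also have "\<dots> \<le> (real K * (c + 1) / \<epsilon> + 8 / \<epsilon>) * real W + (4 * real W^2) / \<epsilon>"
        proof -
          have "8 * 1 \<le> 8 * (1/\<epsilon>)" using inv1 by (intro mult_left_mono) auto
          then have "8 \<le> 8 / \<epsilon>" by simp
          moreover have "(4 * real W^2) * 1 \<le> (4 * real W^2) * (1/\<epsilon>)" using inv1 by (intro mult_left_mono) auto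
          then have "real W^2 * 4 \<le> (4 * real W^2) / \<epsilon>" by (simp add: mult.commute)
          ultimately show ?thesis using mC W1 by (intro add_mono mult_right_mono) auto
        qed
        also have "\<dots> = (real K * (c + 1) * real W + 8 * real W + 4 * real W^2) / \<epsilon>"
          using e0 by (simp add: field_simps)
        also have "\<dots> \<le> C / \<epsilon>" unfolding C_def using e0 by (simp add: divide_right_mono)
        finally show ?thesis .
      qed
    qed
  qed
qed


end
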